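(* For all $n,k\geqslant 1$, the number $\mathfrak{f}_{n,k}$ of words of length $n$ on the alphabet $\{1,\dots,k\}$ avoiding both patterns $010$ and $120$ and containing every letter of $\{1,\dots,k\}$ equals the number of dissections of a convex $(n+2)$-gon by non-crossing diagonals into $k$ regions, and $$\mathfrak{f}_{n,k}=\frac{1}{k}\binom{n-1}{k-1}\binom{n+k}{k-1}.$$
   Context: A word contains a pattern $p$ if some subsequence is order-isomorphic to $p$; otherwise it avoids $p$. Avoiding $010$: no $i<j<l$ with $\omega_i=\omega_l<\omega_j$. Avoiding $120$: no $i<j<l$ with $\omega_l<\omega_i<\omega_j$. *)

theory Defs
  imports Complex_Main
begin

definition avoids010 :: "nat list \<Rightarrow> bool" where
  "avoids010 w \<longleftrightarrow> \<not> (\<exists>i j l. i < j \<and> j < l \<and> l < length w \<and> w ! i = w ! l \<and> w ! l < w ! j)"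

definition avoids120 :: "nat list \<Rightarrow> bool" where
  "avoids120 w \<longleftrightarrow> \<not> (\<exists>i j l. i < j \<and> j < l \<and> l < length w \<and> w ! l < w ! i \<and> w ! i < w ! j)"

definition f_words :: "nat \<Rightarrow> nat \<Rightarrow> nat list set" where
  "f_words n k = {w. length w = n \<and> set w = {1..k} \<and> avoids010 w \<and> avoids120 w}"

text \<open>Convex m-gon with vertices 0,...,m-1 in cyclic order. A diagonal is a pair (i,j),
  i < j, of non-adjacent vertices.\<close>
definition diagonals :: "nat \<Rightarrow> (nat \<times> nat) set" where
  "diagonals m = {(i, j). i < j \<and> j < m \<and> i + 2 \<le> j \<and> \<not> (i = 0 \<and> j + 1 = m)}"

definition crossing :: "nat \<times> nat \<Rightarrow> nat \<times> nat \<Rightarrow> bool" where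
  "crossing d e \<longleftrightarrow> (case d of (a, b) \<Rightarrow> case e of (c, e') \<Rightarrow>
      (a < c \<and> c < b \<and> b < e') \<or> (c < a \<and> a < e' \<and> e' < b))"

text \<open>A dissection of the convex m-gon by non-crossing diagonals into k regions:
  a set of pairwise non-crossing diagonals; a set of r such diagonals cuts the polygon
  into exactly r+1 regions, so k regions means k-1 diagonals.\<close>
definition dissections :: "nat \<Rightarrow> nat \<Rightarrow> (nat \<times> nat) set set" where
  "dissections m k = {D. D \<subseteq> diagonals m \<and> (\<forall>d\<in>D. \<forall>e\<in>D. \<not> crossing d e) \<and> card D + 1 = k}"

end

theory Submission
  imports Defs
begin

fun ac :: "nat \<Rightarrow> nat \<Rightarrow> nat \<Rightarrow> nat" where
  "ac 0 k s = (if k = 1 \<and> s = 1 then 1 else 0)"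
| "ac (Suc n) k s = (if s = 0 then 0 else (\<Sum>t=s..k. ac n k t) + (\<Sum>t=s-1..k-1. ac n (k-1) t))"

lemma A_s0: "ac n k 0 = 0"
  by (cases n) auto

lemma A_big: "k < s \<Longrightarrow> ac n k s = 0"
proof (induction n arbitrary: k s)
  case 0 then show ?case by auto
next
  case (Suc n)
  have "(\<Sum>t=s-1..k-1. ac n (k-1) t) = 0"
  proof (rule sum.neutral, intro ballI)
    fix t assume "t \<in> {s-1..k-1}"
    then show "ac n (k-1) t = 0"
      using Suc by (cases "t = 0") (auto simp: A_s0)
  qed
  then show ?case using Suc by simp
qed

lemma A_local:
  assumes "s \<ge> 1"
  shows "ac (Suc n) k s = ac (Suc n) k (Suc s) + ac n k s + ac n (k-1) (s-1)"
proof -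
  have e1: "(\<Sum>t=s..k. ac n k t) = ac n k s + (\<Sum>t=Suc s..k. ac n k t)"
  proof (cases "s \<le> k")
    case True then show ?thesis by (simp add: sum.atLeast_Suc_atMost)
  next
    case False then show ?thesis by (simp add: A_big)
  qed
  have e2: "(\<Sum>t=s-1..k-1. ac n (k-1) t) = ac n (k-1) (s-1) + (\<Sum>t=s..k-1. ac n (k-1) t)"
  proof (cases "s - 1 \<le> k - 1")
    case True
    then have "(\<Sum>t=s-1..k-1. ac n (k-1) t) = ac n (k-1) (s-1) + (\<Sum>t=Suc (s-1)..k-1. ac n (k-1) t)"
      by (simp add: sum.atLeast_Suc_atMost)
    then show ?thesis using assms by simp
  next
    case False then show ?thesis by (simp add: A_big)
  qed
  show ?thesis using assms e1 e2 by simp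
qed

definition rf :: "int \<Rightarrow> real" where
  "rf i = (if i < 0 then 0 else 1 / fact (nat i))"

lemma rf_pred: "rf (i - 1) = of_int i * rf i"
proof (cases "i \<le> 0")
  case True then show ?thesis by (cases "i = 0") (auto simp: rf_def)
next
  case False
  define m where "m = nat (i - 1)"
  have im: "i = int m + 1" using False unfolding m_def by simp
  have a: "rf (i - 1) = 1 / fact m" unfolding rf_def im by simp
  have b: "rf i = 1 / fact (Suc m)" unfolding rf_def im
    by (simp add: nat_add_distrib)
  have c: "(fact (Suc m) :: real) = (real m + 1) * fact m" by (simp add: fact_Suc)
  have d: "(of_int i :: real) = real m + 1" unfolding im by simp
  show ?thesis unfolding a b c d by simp
qed

lemma rf_pred': "rf (i - 1) = of_int i * rf i" by (rule rf_pred)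

definition cfr :: "nat \<Rightarrow> nat \<Rightarrow> nat \<Rightarrow> real" where
  "cfr n k s = real s * fact (n + k - s) * rf (int k - int s) * rf (int n + 1 - int k) / fact k"

lemma cfr_local:
  assumes "1 \<le> s" "s \<le> k"
  shows "cfr (Suc n) k s = cfr (Suc n) k (Suc s) + cfr n k s + (if s = 1 then 0 else cfr n (k-1) (s-1))"
proof -
  define N where "N = n + k - s"
  define x where "x = int k - int s"
  define y where "y = int n + 2 - int k"
  have fk: "(fact k :: real) = real k * fact (k - 1)"
    using assms by (metis fact_nonzero fact_num_eq_if of_nat_eq_0_iff not_one_le_zero le_trans)
  have kpos: "(fact k :: real) > 0" by simp
  have L: "cfr (Suc n) k s = real s * (real N + 1) * fact N * rf x * rf y / fact k"
    unfolding cfr_def N_def x_def y_def using assms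
    by (simp add: Suc_diff_le fact_Suc algebra_simps)
  have R1: "cfr (Suc n) k (Suc s) = (real s + 1) * fact N * (of_int x * rf x) * rf y / fact k"
  proof -
    have "int k - int (Suc s) = x - 1" unfolding x_def by simp
    then have h: "rf (int k - int (Suc s)) = of_int x * rf x" by (simp only: rf_pred)
    have "Suc n + k - Suc s = N" unfolding N_def by simp
    moreover have "int (Suc n) + 1 - int k = y" unfolding y_def by simp
    ultimately show ?thesis unfolding cfr_def h by simp
  qed
  have R2: "cfr n k s = real s * fact N * rf x * (of_int y * rf y) / fact k"
  proof -
    have "int n + 1 - int k = y - 1" unfolding y_def by simp
    then have h: "rf (int n + 1 - int k) = of_int y * rf y" by (simp only: rf_pred)
    show ?thesis unfolding cfr_def h N_def x_def by simp
  qed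
  have R3: "(if s = 1 then 0 else cfr n (k-1) (s-1)) = (real s - 1) * real k * fact N * rf x * rf y / fact k"
  proof (cases "s = 1")
    case True then show ?thesis by simp
  next
    case False
    have "n + (k-1) - (s-1) = N" unfolding N_def using assms by simp
    moreover have "int (k-1) - int (s-1) = x" unfolding x_def using assms by simp
    moreover have "int n + 1 - int (k-1) = y" unfolding y_def using assms by simp
    moreover have "real (s - 1) = real s - 1" using assms by simp
    ultimately have "cfr n (k-1) (s-1) = (real s - 1) * fact N * rf x * rf y / fact (k-1)"
      unfolding cfr_def by simp
    also have "\<dots> = (real s - 1) * real k * fact N * rf x * rf y / fact k"
      unfolding fk using assms by simp
    finally show ?thesis using False by simp
  qed
  have xr: "of_int x = real k - real s" unfolding x_def using assms by simp
  have yr: "of_int y = real n + 2 - real k" unfolding y_def by simp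
  have Nr: "real N = real n + real k - real s" unfolding N_def using assms by simp
  have key: "real s * (real N + 1) = (real s + 1) * of_int x + real s * of_int y + (real s - 1) * real k"
    unfolding xr yr Nr by (simp add: algebra_simps)
  define C where "C = fact N * rf x * rf y / fact k"
  have "cfr (Suc n) k s = C * (real s * (real N + 1))" unfolding L C_def by (simp add: ac_simps)
  also have "\<dots> = C * ((real s + 1) * of_int x) + C * (real s * of_int y) + C * ((real s - 1) * real k)"
    unfolding key by (simp add: algebra_simps)
  also have "\<dots> = cfr (Suc n) k (Suc s) + cfr n k s + (if s = 1 then 0 else cfr n (k-1) (s-1))"
    unfolding R1 R2 R3 C_def by (simp add: ac_simps)
  finally show ?thesis .
qed


lemma rf_neg: "i < 0 \<Longrightarrow> rf i = 0" by (simp add: rf_def)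
lemma rf_nat: "rf (int m) = 1 / fact m" by (simp add: rf_def)

lemma cfr_big: "k < s \<Longrightarrow> cfr n k s = 0"
  unfolding cfr_def by (simp add: rf_neg)

lemma A_cfr: "1 \<le> s \<Longrightarrow> real (ac n k s) = cfr n k s"
proof (induction n arbitrary: k s)
  case 0
  show ?case
  proof (cases "k < s")
    case True then show ?thesis by (simp add: cfr_big)
  next
    case False
    show ?thesis
    proof (cases "k = 1")
      case True
      then have "s = 1" using False 0 by simp
      then show ?thesis using True by (simp add: cfr_def rf_def)
    next
      case k1: False
      then have "int 0 + 1 - int k < 0" using False 0 by simp
      then show ?thesis using k1 by (simp add: cfr_def rf_neg)
    qed
  qed
next
  case (Suc n)
  note IHn = Suc.IH
  have main: "\<And>d s. s \<ge> 1 \<Longrightarrow> k - s = d \<Longrightarrow> real (ac (Suc n) k s) = cfr (Suc n) k s"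
  proof -
    fix d
    show "\<And>s. s \<ge> 1 \<Longrightarrow> k - s = d \<Longrightarrow> real (ac (Suc n) k s) = cfr (Suc n) k s"
    proof (induction d)
      case 0
      show ?case
      proof (cases "k < s")
        case True then show ?thesis by (simp only: A_big[OF True] cfr_big[OF True] of_nat_0)
      next
        case False
        then have sk: "s = k" using 0 by simp
        have "real (ac (Suc n) k s) = real (ac (Suc n) k (Suc s)) + real (ac n k s) + real (ac n (k-1) (s-1))"
          using A_local[OF 0(1), of n k] by simp
        also have "\<dots> = cfr (Suc n) k (Suc s) + cfr n k s + (if s = 1 then 0 else cfr n (k-1) (s-1))"
          using IHn 0(1) sk by (simp add: A_big cfr_big A_s0)
        also have "\<dots> = cfr (Suc n) k s" using cfr_local[of s k n] 0(1) sk by simp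
        finally show ?thesis .
      qed
    next
      case (Suc d)
      then have sk: "s < k" by simp
      have "real (ac (Suc n) k s) = real (ac (Suc n) k (Suc s)) + real (ac n k s) + real (ac n (k-1) (s-1))"
        using A_local[OF Suc(2), of n k] by simp
      also have "\<dots> = cfr (Suc n) k (Suc s) + cfr n k s + (if s = 1 then 0 else cfr n (k-1) (s-1))"
        using Suc.IH[of "Suc s"] Suc.prems sk IHn by (simp add: A_s0)
      also have "\<dots> = cfr (Suc n) k s" using cfr_local[of s k n] Suc(2) sk by simp
      finally show ?case .
    qed
  qed
  show ?case using main[OF Suc.prems refl] .
qed


definition Ssum :: "nat \<Rightarrow> nat \<Rightarrow> nat" where
  "Ssum n k = (\<Sum>s\<le>k. ac n k s)"

lemma sum_from1: "(\<Sum>s\<le>k. ac n k s) = (\<Sum>s=1..k. ac n k s)"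
proof -
  have "{..k} = insert 0 {1..k}" by auto
  then show ?thesis by (simp add: A_s0)
qed

lemma A1_S: "k \<ge> 1 \<Longrightarrow> ac (Suc n) k 1 = Ssum n k + Ssum n (k-1)"
proof -
  have "ac (Suc n) k 1 = (\<Sum>t=1..k. ac n k t) + (\<Sum>t=0..k-1. ac n (k-1) t)" by simp
  also have "\<dots> = Ssum n k + Ssum n (k-1)" by (simp add: Ssum_def sum_from1 atLeast0AtMost)
  finally show ?thesis .
qed

lemma binom_rf: "real (a choose b) = fact a * rf (int b) * rf (int a - int b)"
proof (cases "b \<le> a")
  case True
  have "int a - int b = int (a - b)" using True by simp
  then have "rf (int a - int b) = 1 / fact (a - b)" by (simp only: rf_nat)
  then show ?thesis using True by (simp add: binomial_fact rf_nat)
next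
  case False
  then show ?thesis by (simp add: rf_neg)
qed

lemma S_formula: "real (Ssum n k) = (1 / real k) * real (n choose (k-1)) * real ((n+1+k) choose (k-1))"
proof (induction k rule: nat_less_induct)
  case (1 k)
  show ?case
  proof (cases "k = 0")
    case True then show ?thesis by (simp add: Ssum_def A_s0)
  next
    case False
    have e: "real (Ssum n k) = cfr (Suc n) k 1 - real (Ssum n (k-1))"
      using A1_S[of k n] A_cfr[of 1 "Suc n" k] False by simp
    show ?thesis
    proof (cases "k = 1")
      case True
      have "int (Suc n) + 1 - int 1 = int (Suc n)" by simp
      then have h1: "rf (int (Suc n) + 1 - int 1) = 1 / fact (Suc n)" by (simp only: rf_nat)
      have h2: "rf (int 1 - int 1) = 1" by (simp add: rf_def)
      have "cfr (Suc n) 1 1 = 1" unfolding cfr_def h1 h2 by simp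
      then show ?thesis using e True by (simp add: Ssum_def A_s0)
    next
      case k1: False
      have ih: "real (Ssum n (k-1)) = (1 / real (k-1)) * real (n choose (k-2)) * real ((n+k) choose (k-2))"
        using 1[rule_format, of "k-1"] False k1 by (simp add: numeral_2_eq_2)
      define R where "R = rf (int k - 1)"
      define T where "T = rf (int n + 2 - int k)"
      define W where "W = fact (n+k) * R * R * T * rf (int n + 2) * fact n"
      have Rk: "R = 1 / fact (k - 1)" unfolding R_def using False
        by (metis of_nat_diff rf_nat of_nat_1 not_less_eq_eq not_gr0 less_one linorder_not_le One_nat_def Suc_le_eq)
      have fk: "(fact k :: real) = real k * fact (k - 1)"
        using False by (metis fact_nonzero fact_num_eq_if)
      have fn2: "rf (int n + 2) * fact n * (real n + 1) * (real n + 2) = 1"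
      proof -
        define P where "P = ((real n + 1) * (real n + 2)) * (fact n :: real)"
        have P0: "P \<noteq> 0" unfolding P_def by simp
        have "int n + 2 = int (Suc (Suc n))" by simp
        then have "rf (int n + 2) = 1 / fact (Suc (Suc n))" by (simp only: rf_nat)
        moreover have "(fact (Suc (Suc n)) :: real) = P"
          unfolding P_def by (simp add: fact_Suc algebra_simps)
        ultimately have "rf (int n + 2) * fact n * (real n + 1) * (real n + 2) = (1 / P) * P"
          unfolding P_def by (simp add: ac_simps)
        also have "\<dots> = 1" using P0 by simp
        finally show ?thesis .
      qed
      have kpos: "real k > 0" using False by simp
      have k1pos: "real k - 1 > 0" using False k1 by simp
      have F1: "(1 / real k) * real (n choose (k-1)) * real ((n+1+k) choose (k-1))
          = W * (of_int (int n + 2 - int k) * (real n + real k + 1)) / real k"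
      proof -
        have a: "real (n choose (k-1)) = fact n * R * (of_int (int n + 2 - int k) * T)"
        proof -
          have "int n - int (k-1) = (int n + 2 - int k) - 1" using False by simp
          then have "rf (int n - int (k-1)) = of_int (int n + 2 - int k) * T" unfolding T_def by (simp only: rf_pred)
          moreover have "int (k-1) = int k - 1" using False by simp
          ultimately show ?thesis unfolding binom_rf R_def by simp
        qed
        have b: "real ((n+1+k) choose (k-1)) = (real n + real k + 1) * fact (n+k) * R * rf (int n + 2)"
        proof -
          have "int (n+1+k) - int (k-1) = int n + 2" using False by simp
          moreover have "int (k-1) = int k - 1" using False by simp
          moreover have "(fact (n+1+k) :: real) = (real n + real k + 1) * fact (n+k)"
            by (simp add: fact_Suc)
          ultimately show ?thesis unfolding binom_rf R_def by (simp add: ac_simps)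
        qed
        show ?thesis unfolding a b W_def by (simp add: field_simps)
      qed
      have F2: "(1 / real (k-1)) * real (n choose (k-2)) * real ((n+k) choose (k-2)) = W * (real k - 1)"
      proof -
        have r2: "rf (int (k-2)) = (real k - 1) * R"
        proof -
          have "int (k-2) = (int k - 1) - 1" using False k1 by simp
          then have "rf (int (k-2)) = of_int (int k - 1) * R" unfolding R_def by (simp only: rf_pred)
          then show ?thesis by simp
        qed
        have a: "real (n choose (k-2)) = fact n * ((real k - 1) * R) * T"
        proof -
          have "int n - int (k-2) = int n + 2 - int k" using False k1 by simp
          then have tt: "rf (int n - int (k-2)) = T" unfolding T_def by (rule arg_cong)
          show ?thesis unfolding binom_rf r2 tt by simp
        qed
        have b: "real ((n+k) choose (k-2)) = fact (n+k) * ((real k - 1) * R) * rf (int n + 2)"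
        proof -
          have "int (n+k) - int (k-2) = int n + 2" using False k1 by simp
          then have tt: "rf (int (n+k) - int (k-2)) = rf (int n + 2)" by (rule arg_cong)
          show ?thesis unfolding binom_rf r2 tt by simp
        qed
        have "real (k - 1) = real k - 1" using False by simp
        then show ?thesis unfolding a b W_def using k1pos by (simp add: field_simps)
      qed
      have C: "cfr (Suc n) k 1 = W * ((real n + 1) * (real n + 2)) / real k"
      proof -
        have "cfr (Suc n) k 1 = fact (n + k) * R * T / fact k"
          unfolding cfr_def R_def T_def using False by (simp add: add.commute)
        also have "\<dots> = fact (n+k) * R * T * (R * (rf (int n + 2) * fact n * (real n + 1) * (real n + 2))) / real k"
          unfolding fn2 fk Rk using kpos by (simp add: field_simps)
        also have "\<dots> = W * ((real n + 1) * (real n + 2)) / real k"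
          unfolding W_def by (simp add: ac_simps)
        finally show ?thesis .
      qed
      have key: "of_int (int n + 2 - int k) * (real n + real k + 1) + real k * (real k - 1) = (real n + 1) * (real n + 2)"
        by (simp add: algebra_simps)
      have "real (Ssum n k) = W * ((real n + 1) * (real n + 2)) / real k - W * (real k - 1)"
        using e ih C F2 by simp
      also have "\<dots> = W * (of_int (int n + 2 - int k) * (real n + real k + 1)) / real k"
        unfolding key[symmetric] using kpos by (simp add: field_simps)
      finally show ?thesis using F1 by (rule trans[OF _ sym])
    qed
  qed
qed


lemma card_fibers:
  assumes "finite A" "\<And>x. x \<in> A \<Longrightarrow> f x \<in> T" "finite T"
  shows "card A = (\<Sum>t\<in>T. card {x\<in>A. f x = t})"
proof -
  have "A = (\<Union>t\<in>T. {x\<in>A. f x = t})" using assms(2) by auto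
  then have "card A = card (\<Union>t\<in>T. {x\<in>A. f x = t})" by simp
  also have "\<dots> = (\<Sum>t\<in>T. card {x\<in>A. f x = t})"
    by (rule card_UN_disjoint) (use assms in auto)
  finally show ?thesis .
qed

lemma av010_snoc:
  "avoids010 (p @ [x]) \<longleftrightarrow> avoids010 p \<and> (\<forall>i j. i < j \<and> j < length p \<longrightarrow> \<not> (p!i = x \<and> x < p!j))"
proof
  assume H: "avoids010 (p @ [x])"
  have "avoids010 p" unfolding avoids010_def
  proof
    assume "\<exists>i j l. i < j \<and> j < l \<and> l < length p \<and> p ! i = p ! l \<and> p ! l < p ! j"
    then obtain i j l where "i < j" "j < l" "l < length p" "p ! i = p ! l" "p ! l < p ! j" by blast
    then have "i < j \<and> j < l \<and> l < length (p@[x]) \<and> (p@[x])!i = (p@[x])!l \<and> (p@[x])!l < (p@[x])!j"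
      by (simp add: nth_append)
    then show False using H unfolding avoids010_def by blast
  qed
  moreover have "\<forall>i j. i < j \<and> j < length p \<longrightarrow> \<not> (p!i = x \<and> x < p!j)"
  proof (intro allI impI notI)
    fix i j assume a: "i < j \<and> j < length p" "p!i = x \<and> x < p!j"
    then have "(p@[x])!i = (p@[x])!(length p) \<and> (p@[x])!(length p) < (p@[x])!j"
      by (simp add: nth_append)
    then show False using H a unfolding avoids010_def by fastforce
  qed
  ultimately show "avoids010 p \<and> (\<forall>i j. i < j \<and> j < length p \<longrightarrow> \<not> (p!i = x \<and> x < p!j))" by blast
next
  assume H: "avoids010 p \<and> (\<forall>i j. i < j \<and> j < length p \<longrightarrow> \<not> (p!i = x \<and> x < p!j))"
  show "avoids010 (p @ [x])" unfolding avoids010_def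
  proof
    assume "\<exists>i j l. i < j \<and> j < l \<and> l < length (p@[x]) \<and> (p@[x]) ! i = (p@[x]) ! l \<and> (p@[x]) ! l < (p@[x]) ! j"
    then obtain i j l where a: "i < j" "j < l" "l < length (p@[x])" "(p@[x]) ! i = (p@[x]) ! l" "(p@[x]) ! l < (p@[x]) ! j" by blast
    show False
    proof (cases "l < length p")
      case True
      then show False using a H unfolding avoids010_def by (auto simp: nth_append)
    next
      case False
      then have "l = length p" using a by simp
      then show False using a H by (auto simp: nth_append)
    qed
  qed
qed

lemma av120_snoc:
  "avoids120 (p @ [x]) \<longleftrightarrow> avoids120 p \<and> (\<forall>i j. i < j \<and> j < length p \<longrightarrow> \<not> (x < p!i \<and> p!i < p!j))"
proof
  assume H: "avoids120 (p @ [x])"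
  have "avoids120 p" unfolding avoids120_def
  proof
    assume "\<exists>i j l. i < j \<and> j < l \<and> l < length p \<and> p ! l < p ! i \<and> p ! i < p ! j"
    then obtain i j l where "i < j" "j < l" "l < length p" "p ! l < p ! i" "p ! i < p ! j" by blast
    then have "i < j \<and> j < l \<and> l < length (p@[x]) \<and> (p@[x])!l < (p@[x])!i \<and> (p@[x])!i < (p@[x])!j"
      by (simp add: nth_append)
    then show False using H unfolding avoids120_def by blast
  qed
  moreover have "\<forall>i j. i < j \<and> j < length p \<longrightarrow> \<not> (x < p!i \<and> p!i < p!j)"
  proof (intro allI impI notI)
    fix i j assume a: "i < j \<and> j < length p" "x < p!i \<and> p!i < p!j"
    then have "(p@[x])!(length p) < (p@[x])!i \<and> (p@[x])!i < (p@[x])!j"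
      by (simp add: nth_append)
    then show False using H a unfolding avoids120_def by fastforce
  qed
  ultimately show "avoids120 p \<and> (\<forall>i j. i < j \<and> j < length p \<longrightarrow> \<not> (x < p!i \<and> p!i < p!j))" by blast
next
  assume H: "avoids120 p \<and> (\<forall>i j. i < j \<and> j < length p \<longrightarrow> \<not> (x < p!i \<and> p!i < p!j))"
  show "avoids120 (p @ [x])" unfolding avoids120_def
  proof
    assume "\<exists>i j l. i < j \<and> j < l \<and> l < length (p@[x]) \<and> (p@[x]) ! l < (p@[x]) ! i \<and> (p@[x]) ! i < (p@[x]) ! j"
    then obtain i j l where a: "i < j" "j < l" "l < length (p@[x])" "(p@[x]) ! l < (p@[x]) ! i" "(p@[x]) ! i < (p@[x]) ! j" by blast
    show False
    proof (cases "l < length p")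
      case True
      then show False using a H unfolding avoids120_def by (auto simp: nth_append)
    next
      case False
      then have "l = length p" using a by simp
      then show False using a H by (auto simp: nth_append)
    qed
  qed
qed

definition valid :: "nat list \<Rightarrow> bool" where
  "valid w \<longleftrightarrow> avoids010 w \<and> avoids120 w"

definition pset :: "nat list \<Rightarrow> nat set" where
  "pset w = {w!i | i. \<exists>j. i < j \<and> j < length w \<and> w!i < w!j}"

definition wM :: "nat list \<Rightarrow> nat" where
  "wM w = Max (insert 0 (pset w))"

lemma psetI: "i < j \<Longrightarrow> j < length w \<Longrightarrow> w!i < w!j \<Longrightarrow> w!i \<in> pset w"
  unfolding pset_def by blast

lemma psetE: "y \<in> pset w \<Longrightarrow> (\<And>i j. y = w!i \<Longrightarrow> i < j \<Longrightarrow> j < length w \<Longrightarrow> w!i < w!j \<Longrightarrow> P) \<Longrightarrow> P"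
  unfolding pset_def by blast

lemma pset_sub: "pset w \<subseteq> set w"
  unfolding pset_def by (blast intro: nth_mem less_trans)

lemma finite_pset: "finite (pset w)"
  using pset_sub finite_subset by blast

lemma valid_snoc:
  "valid (p @ [x]) \<longleftrightarrow> valid p \<and> (\<forall>y\<in>pset p. y < x)"
proof -
  have "(\<forall>i j. i < j \<and> j < length p \<longrightarrow> \<not> (p!i = x \<and> x < p!j)) \<and>
        (\<forall>i j. i < j \<and> j < length p \<longrightarrow> \<not> (x < p!i \<and> p!i < p!j))
     \<longleftrightarrow> (\<forall>y\<in>pset p. y < x)" (is "?L \<longleftrightarrow> ?R")
  proof
    assume L: ?L
    show ?R
    proof
      fix y assume "y \<in> pset p"
      then show "y < x"
      proof (rule psetE)
        fix i j assume "y = p!i" "i < j" "j < length p" "p!i < p!j"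
        then show "y < x" using L by (metis linorder_neqE_nat)
      qed
    qed
  next
    assume R: ?R
    show ?L
    proof (intro conjI allI impI notI)
      fix i j assume a: "i < j \<and> j < length p" "p!i = x \<and> x < p!j"
      then have "p!i \<in> pset p" by (intro psetI) auto
      then show False using R a by auto
    next
      fix i j assume a: "i < j \<and> j < length p" "x < p!i \<and> p!i < p!j"
      then have "p!i \<in> pset p" by (intro psetI) auto
      then show False using R a by auto
    qed
  qed
  then show ?thesis unfolding valid_def av010_snoc av120_snoc by blast
qed

lemma pset_lt_iff: "x \<ge> 1 \<Longrightarrow> (\<forall>y\<in>pset p. y < x) \<longleftrightarrow> wM p < x"
  unfolding wM_def using finite_pset by (auto simp: Max_less_iff)

lemma valid_snoc': "x \<ge> 1 \<Longrightarrow> valid (p @ [x]) \<longleftrightarrow> valid p \<and> wM p < x"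
  using valid_snoc pset_lt_iff by blast

lemma pset_snoc: "pset (p @ [x]) = pset p \<union> {y \<in> set p. y < x}"
proof -
  have "pset (p @ [x]) \<subseteq> pset p \<union> {y \<in> set p. y < x}"
  proof
    fix y assume "y \<in> pset (p @ [x])"
    then obtain i j where a: "y = (p@[x])!i" "i < j" "j < Suc (length p)" "(p@[x])!i < (p@[x])!j"
      unfolding pset_def by auto
    show "y \<in> pset p \<union> {y \<in> set p. y < x}"
    proof (cases "j < length p")
      case True then show ?thesis using a unfolding pset_def by (auto simp: nth_append)
    next
      case False then have "j = length p" using a by simp
      then show ?thesis using a by (auto simp: nth_append)
    qed
  qed
  moreover have "pset p \<union> {y \<in> set p. y < x} \<subseteq> pset (p @ [x])"
  proof
    fix y assume "y \<in> pset p \<union> {y \<in> set p. y < x}"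
    then show "y \<in> pset (p @ [x])"
    proof
      assume "y \<in> pset p"
      then obtain i j where a: "y = p!i" "i < j" "j < length p" "p!i < p!j" unfolding pset_def by auto
      then have "y = (p@[x])!i \<and> i < j \<and> j < length (p@[x]) \<and> (p@[x])!i < (p@[x])!j"
        by (simp add: nth_append)
      then show ?thesis unfolding pset_def by blast
    next
      assume "y \<in> {y \<in> set p. y < x}"
      then obtain i where a: "i < length p" "y = p!i" "y < x" by (auto simp: in_set_conv_nth)
      then have "y = (p@[x])!i \<and> i < length p \<and> length p < length (p@[x]) \<and> (p@[x])!i < (p@[x])!(length p)"
        by (simp add: nth_append)
      then show ?thesis unfolding pset_def by blast
    qed
  qed
  ultimately show ?thesis by blast
qed

lemma wM_snoc:
  assumes "wM p < x" "x \<ge> 1" "x \<le> 1 \<or> x - 1 \<in> set p"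
  shows "wM (p @ [x]) = x - 1"
proof -
  have fin: "finite (insert 0 (pset (p @ [x])))" using finite_pset by simp
  have all: "\<forall>y\<in>pset p. y < x" using pset_lt_iff assms by blast
  show ?thesis unfolding wM_def
  proof (rule Max_eqI[OF fin])
    fix y assume "y \<in> insert 0 (pset (p @ [x]))"
    then show "y \<le> x - 1" using all assms unfolding pset_snoc by auto
  next
    show "x - 1 \<in> insert 0 (pset (p @ [x]))" using assms unfolding pset_snoc by auto
  qed
qed

lemma map_mono_props:
  assumes "strict_mono (g :: nat \<Rightarrow> nat)"
  shows "valid (map g w) \<longleftrightarrow> valid w"
proof -
  have lt: "\<And>a b. g a < g b \<longleftrightarrow> a < b" using assms by (simp add: strict_mono_less)
  have eq: "\<And>a b. g a = g b \<longleftrightarrow> a = b" using assms by (simp add: strict_mono_eq)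
  show ?thesis unfolding valid_def avoids010_def avoids120_def length_map
    by (simp add: lt eq cong: conj_cong)
qed

lemma pset_map:
  assumes "strict_mono (g :: nat \<Rightarrow> nat)"
  shows "pset (map g w) = g ` pset w"
proof -
  have lt: "\<And>a b. g a < g b \<longleftrightarrow> a < b" using assms by (simp add: strict_mono_less)
  show ?thesis
  proof (intro set_eqI iffI)
    fix y assume "y \<in> pset (map g w)"
    then show "y \<in> g ` pset w"
    proof (rule psetE)
      fix i j assume a: "y = map g w!i" "i < j" "j < length (map g w)" "map g w!i < map g w!j"
      then have "w!i \<in> pset w" by (intro psetI) (auto simp: lt)
      moreover have "y = g (w!i)" using a by simp
      ultimately show ?thesis by blast
    qed
  next
    fix y assume "y \<in> g ` pset w"
    then obtain z where z: "z \<in> pset w" "y = g z" by blast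
    from z(1) show "y \<in> pset (map g w)"
    proof (rule psetE)
      fix i j assume a: "z = w!i" "i < j" "j < length w" "w!i < w!j"
      then have "map g w!i \<in> pset (map g w)" by (intro psetI) (auto simp: lt)
      then show ?thesis using a z by simp
    qed
  qed
qed
lemma wM_map:
  assumes "strict_mono (g :: nat \<Rightarrow> nat)" "g 0 = 0"
  shows "wM (map g w) = g (wM w)"
proof -
  have "insert 0 (pset (map g w)) = g ` insert 0 (pset w)" using assms pset_map by simp
  then have "wM (map g w) = Max (g ` insert 0 (pset w))" unfolding wM_def by simp
  also have "\<dots> = g (Max (insert 0 (pset w)))"
    by (rule mono_Max_commute[symmetric]) (use assms strict_mono_mono finite_pset in auto)
  finally show ?thesis unfolding wM_def .
qed


definition shift :: "nat \<Rightarrow> nat \<Rightarrow> nat" where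
  "shift u y = (if u < y then y + 1 else y)"

definition unshift :: "nat \<Rightarrow> nat \<Rightarrow> nat" where
  "unshift x y = (if x < y then y - 1 else y)"

lemma shift_mono: "strict_mono (shift u)"
  unfolding strict_mono_def shift_def by auto

lemma shift_0: "shift u 0 = 0" unfolding shift_def by simp

lemma shift_unshift: "x \<ge> 1 \<Longrightarrow> y \<noteq> x \<Longrightarrow> shift (x - 1) (unshift x y) = y"
  unfolding shift_def unshift_def by auto

lemma shift_image: "u \<le> k - 1 \<Longrightarrow> k \<ge> 1 \<Longrightarrow> shift u ` {1..k-1} = {1..k} - {u+1}"
proof (intro set_eqI iffI)
  fix z assume "u \<le> k - 1" "k \<ge> 1" "z \<in> shift u ` {1..k-1}"
  then show "z \<in> {1..k} - {u+1}" unfolding shift_def by auto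
next
  fix z assume a: "u \<le> k - 1" "k \<ge> 1" "z \<in> {1..k} - {u+1}"
  show "z \<in> shift u ` {1..k-1}"
  proof (cases "z \<le> u")
    case True
    then have "shift u z = z" unfolding shift_def by simp
    show ?thesis by (rule image_eqI[where x=z]) (use a True \<open>shift u z = z\<close> in auto)
  next
    case False
    then have "shift u (z - 1) = z" "z - 1 \<in> {1..k-1}" using a unfolding shift_def by auto
    then show ?thesis by (metis image_eqI)
  qed
qed

lemma unshift_image: "x \<in> {1..k} \<Longrightarrow> unshift x ` ({1..k} - {x}) = {1..k-1}"
proof (intro set_eqI iffI)
  fix z assume "x \<in> {1..k}" "z \<in> unshift x ` ({1..k} - {x})"
  then show "z \<in> {1..k-1}" unfolding unshift_def by auto
next
  fix z assume a: "x \<in> {1..k}" "z \<in> {1..k-1}"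
  show "z \<in> unshift x ` ({1..k} - {x})"
  proof (cases "z < x")
    case True
    then have "unshift x z = z" unfolding unshift_def by simp
    show ?thesis by (rule image_eqI[where x=z]) (use a True \<open>unshift x z = z\<close> in auto)
  next
    case False
    then have "unshift x (z + 1) = z" "z + 1 \<in> {1..k} - {x}" using a unfolding unshift_def by auto
    then show ?thesis by (metis image_eqI)
  qed
qed

lemma finite_f_words: "finite (f_words n k)"
proof -
  have "f_words n k \<subseteq> {w. set w \<subseteq> {1..k} \<and> length w = n}" unfolding f_words_def by auto
  moreover have "finite {w. set w \<subseteq> {1..k} \<and> length w = n}" by (rule finite_lists_length_eq) simp
  ultimately show ?thesis by (rule finite_subset)
qed

lemma f_words_valid: "w \<in> f_words n k \<longleftrightarrow> length w = n \<and> set w = {1..k} \<and> valid w"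
  unfolding f_words_def valid_def by simp

definition Wset :: "nat \<Rightarrow> nat \<Rightarrow> nat \<Rightarrow> nat list set" where
  "Wset n k s = {w \<in> f_words n k. k - wM w = s}"

lemma wM_le: "wM w \<le> Max (insert 0 (set w))"
  unfolding wM_def using pset_sub finite_pset by (intro Max_mono) auto

lemma wM_bound: "set w \<subseteq> {..m} \<Longrightarrow> wM w \<le> m"
  unfolding wM_def using pset_sub finite_pset by (subst Max_le_iff) auto

lemma W_rec:
  assumes s1: "1 \<le> s" and sk: "s \<le> k"
  shows "Wset (Suc n) k s = (\<lambda>p. p @ [k+1-s]) ` {p \<in> f_words n k. s \<le> k - wM p}
     \<union> (\<lambda>p. map (shift (k-s)) p @ [k+1-s]) ` {p \<in> f_words n (k-1). s - 1 \<le> (k-1) - wM p}"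
  (is "?L = ?I1 \<union> ?I2")
proof (intro equalityI subsetI)
  fix w assume w: "w \<in> ?L"
  then have wl: "length w = Suc n" and ws: "set w = {1..k}" and wv: "valid w" and wst: "k - wM w = s"
    unfolding Wset_def f_words_valid by auto
  obtain p x where px: "w = p @ [x]" using wl by (metis length_Suc_conv_rev)
  have x1k: "x \<in> {1..k}" using ws px by auto
  have vp: "valid p" and lt: "wM p < x" using wv px valid_snoc' x1k by auto
  have xm1: "x \<le> 1 \<or> x - 1 \<in> set p"
  proof (cases "x \<le> 1")
    case False
    then have "x - 1 \<in> set w" using ws x1k by auto
    then show ?thesis using px False by auto
  qed simp
  have wMw: "wM w = x - 1" using wM_snoc[OF lt _ xm1] x1k px by auto
  have xs: "x = k + 1 - s" using wst wMw x1k by auto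
  have pl: "length p = n" using wl px by simp
  show "w \<in> ?I1 \<union> ?I2"
  proof (cases "x \<in> set p")
    case True
    then have "set p = {1..k}" using ws px by auto
    then have "p \<in> {p \<in> f_words n k. s \<le> k - wM p}" using vp pl lt xs sk
      unfolding f_words_valid by auto
    then show ?thesis using px xs by blast
  next
    case False
    define p' where "p' = map (unshift x) p"
    have x1: "x \<ge> 1" using x1k by simp
    have "\<forall>y\<in>set p. shift (x - 1) (unshift x y) = y"
      using False shift_unshift[OF x1] by metis
    then have pp': "map (shift (x - 1)) p' = p" unfolding p'_def by (simp add: map_idI)
    have sp: "set p = {1..k} - {x}" using ws px False by auto
    have sp': "set p' = {1..k-1}" unfolding p'_def using sp unshift_image[OF x1k] by simp
    have vp': "valid p'" using vp pp' map_mono_props[OF shift_mono, of "x-1" p'] by simp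
    have wMp: "wM p = shift (x-1) (wM p')" using pp' wM_map[OF shift_mono shift_0, of "x-1" p'] by simp
    have "wM p' \<le> shift (x-1) (wM p')" unfolding shift_def by simp
    then have "wM p' \<le> x - 1" using wMp lt by simp
    then have "p' \<in> {p \<in> f_words n (k-1). s - 1 \<le> (k-1) - wM p}"
      using vp' sp' pl xs s1 sk unfolding f_words_valid p'_def by auto
    moreover have "k - s = x - 1" "k + 1 - s = x" using xs sk s1 by auto
    then have "w = map (shift (k-s)) p' @ [k+1-s]" using pp' px by simp
    ultimately show ?thesis by blast
  qed
next
  fix w assume "w \<in> ?I1 \<union> ?I2"
  then show "w \<in> ?L"
  proof
    assume "w \<in> ?I1"
    then obtain p where p: "p \<in> f_words n k" "s \<le> k - wM p" and w: "w = p @ [k+1-s]" by blast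
    define x where "x = k + 1 - s"
    have x1k: "x \<in> {1..k}" unfolding x_def using s1 sk by auto
    have lt: "wM p < x" using p(2) sk s1 unfolding x_def by auto
    have ps: "set p = {1..k}" "length p = n" "valid p" using p(1) unfolding f_words_valid by auto
    have xm1: "x \<le> 1 \<or> x - 1 \<in> set p" using ps x1k by auto
    have ww: "w = p @ [x]" using w x_def by simp
    have x1: "x \<ge> 1" using x1k by simp
    have "wM w = x - 1" unfolding ww by (rule wM_snoc[OF lt x1 xm1])
    moreover have "k - (x - 1) = s" unfolding x_def using s1 sk by simp
    moreover have "valid w" unfolding ww using valid_snoc'[OF x1, of p] ps(3) lt by blast
    moreover have "set w = {1..k}" unfolding ww using ps(1) x1k by auto
    moreover have "length w = Suc n" using ww ps by simp
    ultimately show ?thesis unfolding Wset_def f_words_valid by simp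
  next
    assume "w \<in> ?I2"
    then obtain p where p: "p \<in> f_words n (k-1)" "s - 1 \<le> (k-1) - wM p"
       and w: "w = map (shift (k-s)) p @ [k+1-s]" by blast
    define u where "u = k - s"
    define q where "q = map (shift u) p"
    have ps: "set p = {1..k-1}" "length p = n" "valid p" using p(1) unfolding f_words_valid by auto
    have "wM p \<le> k - 1" using ps(1) by (intro wM_bound) auto
    then have wMp: "wM p \<le> u" using p(2) s1 sk unfolding u_def by auto
    have wMq: "wM q = wM p" unfolding q_def wM_map[OF shift_mono shift_0] using wMp
      by (simp add: shift_def)
    have uk: "u \<le> k - 1" "k \<ge> 1" unfolding u_def using s1 sk by auto
    have sq: "set q = {1..k} - {u+1}" unfolding q_def set_map ps(1) by (rule shift_image[OF uk])
    have vq: "valid q" unfolding q_def using ps map_mono_props[OF shift_mono] by simp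
    have x1k: "u + 1 \<in> {1..k}" unfolding u_def using s1 sk by auto
    have lt: "wM q < u + 1" using wMq wMp by simp
    have xm1: "u + 1 \<le> 1 \<or> u + 1 - 1 \<in> set q"
    proof (cases "u = 0")
      case False then have "u \<in> {1..k} - {u+1}" using uk by auto
      then show ?thesis unfolding sq by simp
    qed simp
    have "k + 1 - s = u + 1" unfolding u_def using s1 sk by simp
    then have ww: "w = q @ [u+1]" using w unfolding q_def u_def by simp
    have x1: "u + 1 \<ge> 1" by simp
    have "wM w = u + 1 - 1" unfolding ww by (rule wM_snoc[OF lt x1 xm1])
    moreover have "k - u = s" unfolding u_def using s1 sk by simp
    moreover have "valid w" unfolding ww using valid_snoc'[OF x1, of q] vq lt by blast
    moreover have "set w = {1..k}"
    proof -
      have "set w = insert (u+1) (set q)" unfolding ww by simp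
      then show ?thesis unfolding sq using insert_Diff[OF x1k] by simp
    qed
    moreover have "length w = Suc n" using ww ps unfolding q_def by simp
    ultimately show ?thesis unfolding Wset_def f_words_valid by simp
  qed
qed


lemma f_words_1: "f_words (Suc 0) k = (if k = 1 then {[1]} else {})"
proof -
  have "w \<in> f_words (Suc 0) k \<longleftrightarrow> k = 1 \<and> w = [1]" for w
  proof
    assume "w \<in> f_words (Suc 0) k"
    then have l: "length w = 1" and s: "set w = {1..k}" unfolding f_words_def by auto
    then obtain x where x: "w = [x]" by (metis One_nat_def length_0_conv length_Suc_conv)
    then have "{1..k} = {x}" using s by simp
    then have "k = 1 \<and> x = 1"
      by (metis atLeastAtMost_singleton_iff)
    then show "k = 1 \<and> w = [1]" using x by simp
  next
    assume "k = 1 \<and> w = [1]"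
    then show "w \<in> f_words (Suc 0) k" unfolding f_words_def avoids010_def avoids120_def by auto
  qed
  then show ?thesis by auto
qed

lemma wM_single: "wM [x] = 0"
  unfolding wM_def pset_def by auto

lemma Wset_range:
  assumes "w \<in> f_words (Suc n) k"
  shows "1 \<le> k - wM w"
proof -
  have s: "set w = {1..k}" and l: "length w = Suc n" using assms unfolding f_words_def by auto
  then have "w \<noteq> []" by auto
  then have "set w \<noteq> {}" by simp
  then have k1: "k \<ge> 1" using s by auto
  have "\<forall>y\<in>pset w. y < k"
  proof
    fix y assume "y \<in> pset w"
    then show "y < k"
    proof (rule psetE)
      fix i j assume a: "y = w!i" "i < j" "j < length w" "w!i < w!j"
      then have "w!j \<in> {1..k}" using s nth_mem by metis
      then show "y < k" using a by simp
    qed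
  qed
  then have "wM w < k" using pset_lt_iff k1 by blast
  then show ?thesis by simp
qed

lemma card_filter_fibers:
  fixes k :: nat
  assumes "finite X" "\<And>p. p \<in> X \<Longrightarrow> f p \<le> k"
  shows "card {p \<in> X. s \<le> f p} = (\<Sum>t=s..k. card {p \<in> X. f p = t})"
proof -
  have "card {p \<in> X. s \<le> f p} = (\<Sum>t\<in>{s..k}. card {p \<in> {p \<in> X. s \<le> f p}. f p = t})"
    by (rule card_fibers) (use assms in auto)
  also have "\<dots> = (\<Sum>t=s..k. card {p \<in> X. f p = t})"
    by (rule sum.cong) (auto intro: arg_cong[where f=card])
  finally show ?thesis .
qed

lemma card_W: "card (Wset (Suc n) k s) = ac n k s"
proof (induction n arbitrary: k s)
  case 0
  show ?case
  proof (cases "k = 1 \<and> s = 1")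
    case True
    then have "Wset (Suc 0) k s = {[1]}" unfolding Wset_def f_words_1 by (auto simp: wM_single)
    then show ?thesis using True by simp
  next
    case False
    then have "Wset (Suc 0) k s = {}" unfolding Wset_def f_words_1 by (auto simp: wM_single)
    then show ?thesis using False by auto
  qed
next
  case (Suc n)
  show ?case
  proof (cases "1 \<le> s \<and> s \<le> k")
    case False
    have "Wset (Suc (Suc n)) k s = {}"
    proof (rule ccontr)
      assume "Wset (Suc (Suc n)) k s \<noteq> {}"
      then obtain w where w: "w \<in> f_words (Suc (Suc n)) k" "k - wM w = s" unfolding Wset_def by auto
      then show False using Wset_range[OF w(1)] False by auto
    qed
    moreover have "ac (Suc n) k s = 0"
    proof (cases "s = 0")
      case True then show ?thesis by (simp add: A_s0)
    next
      case s0: False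
      then have "k < s" using False by simp
      then show ?thesis by (rule A_big)
    qed
    ultimately show ?thesis by simp
  next
    case True
    then have s1: "1 \<le> s" and sk: "s \<le> k" by auto
    define X1 where "X1 = {p \<in> f_words (Suc n) k. s \<le> k - wM p}"
    define X2 where "X2 = {p \<in> f_words (Suc n) (k-1). s - 1 \<le> (k-1) - wM p}"
    define g1 where "g1 = (\<lambda>p::nat list. p @ [k+1-s])"
    define g2 where "g2 = (\<lambda>p. map (shift (k-s)) p @ [k+1-s])"
    have rec: "Wset (Suc (Suc n)) k s = g1 ` X1 \<union> g2 ` X2"
      unfolding X1_def X2_def g1_def g2_def by (rule W_rec[OF s1 sk])
    have fin1: "finite X1" unfolding X1_def using finite_f_words by simp
    have fin2: "finite X2" unfolding X2_def using finite_f_words by simp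
    have inj1: "inj_on g1 X1" unfolding g1_def inj_on_def by simp
    have injs: "inj (shift (k-s))" using shift_mono strict_mono_imp_inj_on by blast
    have inj2: "inj_on g2 X2" unfolding g2_def inj_on_def using inj_map_eq_map[OF injs] by simp
    have disj: "g1 ` X1 \<inter> g2 ` X2 = {}"
    proof (rule ccontr)
      assume "g1 ` X1 \<inter> g2 ` X2 \<noteq> {}"
      then obtain p q where pq: "p \<in> X1" "q \<in> X2" "g1 p = g2 q" by blast
      then have "p = map (shift (k-s)) q" unfolding g1_def g2_def by simp
      moreover have "k + 1 - s \<in> set p" using pq(1) s1 sk unfolding X1_def f_words_def by auto
      ultimately obtain y where "shift (k-s) y = k + 1 - s" by auto
      then show False using s1 sk unfolding shift_def by (auto split: if_splits)
    qed
    have "card (Wset (Suc (Suc n)) k s) = card X1 + card X2"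
      unfolding rec using card_Un_disjoint[of "g1 ` X1" "g2 ` X2"] fin1 fin2 disj
        card_image[OF inj1] card_image[OF inj2] by simp
    also have "card X1 = (\<Sum>t=s..k. card (Wset (Suc n) k t))"
      unfolding X1_def Wset_def by (rule card_filter_fibers) (auto simp: finite_f_words)
    also have "card X2 = (\<Sum>t=s-1..k-1. card (Wset (Suc n) (k-1) t))"
      unfolding X2_def Wset_def by (rule card_filter_fibers) (auto simp: finite_f_words)
    finally show ?thesis using Suc.IH s1 by simp
  qed
qed

lemma card_f_words: "card (f_words (Suc n) k) = Ssum n k"
proof -
  have "card (f_words (Suc n) k) = (\<Sum>t\<in>{..k}. card {w \<in> f_words (Suc n) k. k - wM w = t})"
    by (rule card_fibers) (auto simp: finite_f_words)
  also have "\<dots> = Ssum n k" unfolding Ssum_def using card_W unfolding Wset_def by simp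
  finally show ?thesis .
qed


lemma take_drop_le:
  assumes "sorted xs" "a \<in> set (take s xs)" "b \<in> set (drop j xs)" "s \<le> j + 1"
  shows "a \<le> (b::nat)"
proof -
  obtain i where i: "i < length (take s xs)" "a = take s xs ! i" using assms(2) by (auto simp: in_set_conv_nth)
  obtain i' where i': "i' < length (drop j xs)" "b = drop j xs ! i'" using assms(3) by (auto simp: in_set_conv_nth)
  have a: "a = xs ! i" "i < s" using i by auto
  have b: "b = xs ! (j + i')" "j + i' < length xs" using i' by auto
  have "i \<le> j + i'" using a(2) assms(4) by simp
  then show ?thesis using a b sorted_nth_mono[OF assms(1)] by simp
qed

lemma take_drop_union: "j \<le> s \<Longrightarrow> set (take s xs) \<union> set (drop j xs) = set xs"
proof -
  assume "j \<le> s"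
  then have "set (take j xs) \<subseteq> set (take s xs)" by (rule set_take_subset_set_take)
  moreover have "set xs = set (take j xs) \<union> set (drop j xs)"
    by (metis append_take_drop_id set_append)
  moreover have "set (take s xs) \<subseteq> set xs" by (rule set_take_subset)
  ultimately show ?thesis by blast
qed

lemma drop_compl: "distinct xs \<Longrightarrow> set (drop j xs) = set xs - set (take j xs)"
proof -
  assume d: "distinct xs"
  have "set xs = set (take j xs) \<union> set (drop j xs)" by (metis append_take_drop_id set_append)
  moreover have "set (take j xs) \<inter> set (drop j xs) = {}"
    using set_take_disj_set_drop_if_distinct[OF d, of j j] by simp
  ultimately show ?thesis by blast
qed

lemma card_take: "distinct xs \<Longrightarrow> card (set (take s xs)) = min s (length xs)"
  by (simp add: distinct_card)

lemma card_drop: "distinct xs \<Longrightarrow> card (set (drop s xs)) = length xs - s"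
  by (simp add: distinct_card)

lemma nth_in_take: "distinct xs \<Longrightarrow> i < length xs \<Longrightarrow> xs ! i \<in> set (take s xs) \<longleftrightarrow> i < s"
proof
  assume a: "distinct xs" "i < length xs" "xs ! i \<in> set (take s xs)"
  show "i < s"
  proof (rule ccontr)
    assume "\<not> i < s"
    then have "drop s xs ! (i - s) = xs ! i" "i - s < length (drop s xs)" using a(2) by auto
    then have "xs ! i \<in> set (drop s xs)" by (metis nth_mem)
    then show False using a(3) set_take_disj_set_drop_if_distinct[OF a(1), of s s] by blast
  qed
next
  assume a: "distinct xs" "i < length xs" "i < s"
  then have "take s xs ! i = xs ! i" "i < length (take s xs)" by simp_all
  then show "xs ! i \<in> set (take s xs)" by (metis nth_mem)
qed

lemma nth_in_drop: "distinct xs \<Longrightarrow> i < length xs \<Longrightarrow> xs ! i \<in> set (drop j xs) \<longleftrightarrow> j \<le> i"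
proof -
  assume d: "distinct xs" "i < length xs"
  have "xs ! i \<in> set xs" using d by simp
  then have "xs ! i \<in> set (drop j xs) \<longleftrightarrow> xs ! i \<notin> set (take j xs)" unfolding drop_compl[OF d(1)] by blast
  moreover have "xs ! i \<in> set (take j xs) \<longleftrightarrow> i < j" by (rule nth_in_take[OF d])
  ultimately show ?thesis by linarith
qed

lemma take_char:
  assumes srt: "sorted xs" and d: "distinct xs" and S: "S \<subseteq> set xs"
    and dc: "\<forall>a\<in>S. \<forall>x\<in>set xs - S. a < (x::nat)"
  shows "set (take (card S) xs) = S"
proof -
  have finS: "finite S" using S finite_subset by blast
  have sub: "S \<subseteq> set (take (card S) xs)"
  proof
    fix a assume a: "a \<in> S"
    then have "a \<in> set xs" using S by blast
    then obtain i where i: "i < length xs" "xs ! i = a" by (metis in_set_conv_nth)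
    show "a \<in> set (take (card S) xs)"
    proof (rule ccontr)
      assume "a \<notin> set (take (card S) xs)"
      then have ci: "card S \<le> i" using nth_in_take[OF d i(1)] i(2) by simp
      have "set (take (Suc i) xs) \<subseteq> S"
      proof
        fix x assume "x \<in> set (take (Suc i) xs)"
        then obtain i' where i': "i' < Suc i" "i' < length xs" "x = xs ! i'"
          by (auto simp: in_set_conv_nth)
        then have xa: "x \<le> a" using sorted_nth_mono[OF srt, of i' i] i by simp
        have xs: "x \<in> set xs" using i' by simp
        show "x \<in> S"
        proof (rule ccontr)
          assume "x \<notin> S"
          then have "a < x" using dc a xs by blast
          then show False using xa by simp
        qed
      qed
      then have "card (set (take (Suc i) xs)) \<le> card S" using finS by (rule card_mono[rotated])
      moreover have "card (set (take (Suc i) xs)) = Suc i" using card_take[OF d] i by simp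
      ultimately show False using ci by simp
    qed
  qed
  moreover have "card (set (take (card S) xs)) \<le> card S"
    using card_take[OF d] by simp
  then show ?thesis using card_seteq[OF List.finite_set sub] by simp
qed

section \<open>Dissection basics\<close>

lemma diag_iff: "(a, b) \<in> diagonals m \<longleftrightarrow> a < b \<and> b < m \<and> a + 2 \<le> b \<and> \<not> (a = 0 \<and> b + 1 = m)"
  unfolding diagonals_def by simp

lemma cross_iff: "crossing (a, b) (c, e) \<longleftrightarrow> (a < c \<and> c < b \<and> b < e) \<or> (c < a \<and> a < e \<and> e < b)"
  unfolding crossing_def by simp

definition isD :: "nat \<Rightarrow> (nat \<times> nat) set \<Rightarrow> bool" where
  "isD m D \<longleftrightarrow> D \<subseteq> diagonals m \<and> (\<forall>d\<in>D. \<forall>e\<in>D. \<not> crossing d e)"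

lemma dissections_iff: "D \<in> dissections m k \<longleftrightarrow> isD m D \<and> card D + 1 = k"
  unfolding dissections_def isD_def by simp

lemma finite_diagonals: "finite (diagonals m)"
proof -
  have "diagonals m \<subseteq> {..<m} \<times> {..<m}" unfolding diagonals_def by auto
  then show ?thesis by (rule finite_subset) auto
qed

lemma isD_finite: "isD m D \<Longrightarrow> finite D"
  unfolding isD_def using finite_diagonals finite_subset by blast

definition nbr :: "nat \<Rightarrow> (nat \<times> nat) set \<Rightarrow> nat set" where
  "nbr m D = {u. (u, m - 1) \<in> D}"

definition dstat :: "nat \<Rightarrow> (nat \<times> nat) set \<Rightarrow> nat" where
  "dstat m D = card (nbr m D) + 1"

definition Dset :: "nat \<Rightarrow> nat \<Rightarrow> nat \<Rightarrow> (nat \<times> nat) set set" where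
  "Dset m k s = {D \<in> dissections m k. dstat m D = s}"

definition Vs :: "nat \<Rightarrow> (nat \<times> nat) set \<Rightarrow> nat set" where
  "Vs m D = nbr m D \<union> {0, m - 2}"

definition NL :: "nat \<Rightarrow> (nat \<times> nat) set \<Rightarrow> nat list" where
  "NL m D = sorted_list_of_set (Vs m D)"

definition lowD :: "nat \<Rightarrow> (nat \<times> nat) set \<Rightarrow> (nat \<times> nat) set" where
  "lowD m D = {d \<in> D. snd d \<noteq> m - 1}"

definition ch :: "nat \<Rightarrow> nat \<Rightarrow> nat \<Rightarrow> (nat \<times> nat) set \<Rightarrow> (nat \<times> nat) set" where
  "ch m s j D = lowD m D \<union> (\<lambda>u. (u, m)) ` (set (take s (NL m D)) - {0})
      \<union> (\<lambda>u. (u, m - 1)) ` (set (drop j (NL m D)) - {m - 2})"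

lemma nbr_range: "m \<ge> 3 \<Longrightarrow> isD m D \<Longrightarrow> nbr m D \<subseteq> {1..m-3}"
proof
  fix u assume m: "m \<ge> 3" "isD m D" and "u \<in> nbr m D"
  then have "(u, m - 1) \<in> diagonals m" unfolding nbr_def isD_def by auto
  then have "u + 2 \<le> m - 1" "\<not> (u = 0 \<and> m - 1 + 1 = m)" unfolding diag_iff by auto
  then show "u \<in> {1..m-3}" using m by auto
qed

lemma nbr_finite: "m \<ge> 3 \<Longrightarrow> isD m D \<Longrightarrow> finite (nbr m D)"
  using nbr_range finite_subset by blast

lemma Vs_facts:
  assumes "m \<ge> 3" "isD m D"
  shows "finite (Vs m D)" "Vs m D \<subseteq> {..m-2}" "0 \<in> Vs m D" "m - 2 \<in> Vs m D"
    "card (Vs m D) = card (nbr m D) + 2"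
proof -
  have r: "nbr m D \<subseteq> {1..m-3}" by (rule nbr_range[OF assms])
  show "finite (Vs m D)" unfolding Vs_def using nbr_finite[OF assms] by simp
  show "Vs m D \<subseteq> {..m-2}" unfolding Vs_def using r by (force simp: subset_iff)
  show "0 \<in> Vs m D" "m - 2 \<in> Vs m D" unfolding Vs_def by auto
  have "0 \<notin> {1..m-3}" "m - 2 \<notin> {1..m-3}" "0 \<noteq> m - 2" using assms(1) by auto
  then have "0 \<notin> nbr m D" "m - 2 \<notin> nbr m D" "0 \<noteq> m - 2" using r by blast+
  then show "card (Vs m D) = card (nbr m D) + 2" unfolding Vs_def using nbr_finite[OF assms]
    by (simp add: insert_commute)
qed

lemma NL_facts:
  assumes "m \<ge> 3" "isD m D"
  shows "sorted (NL m D)" "distinct (NL m D)" "set (NL m D) = Vs m D"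
    "length (NL m D) = card (nbr m D) + 2"
    "NL m D ! 0 = 0" "NL m D ! (length (NL m D) - 1) = m - 2"
proof -
  note V = Vs_facts[OF assms]
  show s: "sorted (NL m D)" "distinct (NL m D)" "set (NL m D) = Vs m D"
    unfolding NL_def using V by auto
  show l: "length (NL m D) = card (nbr m D) + 2" unfolding NL_def using V by simp
  have len: "length (NL m D) > 0" using l by simp
  obtain i where i: "i < length (NL m D)" "NL m D ! i = 0" using V(3) s(3) by (metis in_set_conv_nth)
  have "NL m D ! 0 \<le> NL m D ! i" using sorted_nth_mono[OF s(1), of 0 i] i by simp
  then show "NL m D ! 0 = 0" using i by simp
  obtain i where i: "i < length (NL m D)" "NL m D ! i = m - 2" using V(4) s(3) by (metis in_set_conv_nth)
  have "NL m D ! i \<le> NL m D ! (length (NL m D) - 1)" using sorted_nth_mono[OF s(1), of i "length (NL m D) - 1"] i by simp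
  moreover have "NL m D ! (length (NL m D) - 1) \<in> Vs m D" using s(3) len
    by (metis diff_less nth_mem zero_less_one)
  ultimately show "NL m D ! (length (NL m D) - 1) = m - 2" using V(2) i by fastforce
qed

lemma NL_len: "m \<ge> 3 \<Longrightarrow> isD m D \<Longrightarrow> length (NL m D) \<ge> 2"
  using NL_facts(4) by simp

lemma zero_in_take:
  assumes "m \<ge> 3" "isD m D" "1 \<le> s"
  shows "0 \<in> set (take s (NL m D))"
proof -
  have "NL m D ! 0 \<in> set (take s (NL m D)) \<longleftrightarrow> 0 < s"
    by (rule nth_in_take[OF NL_facts(2)[OF assms(1,2)]]) (use NL_len[OF assms(1,2)] in auto)
  then show ?thesis using NL_facts(5)[OF assms(1,2)] assms(3) by simp
qed

lemma zero_notin_drop: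
  assumes "m \<ge> 3" "isD m D" "1 \<le> j"
  shows "0 \<notin> set (drop j (NL m D))"
proof -
  have "NL m D ! 0 \<in> set (drop j (NL m D)) \<longleftrightarrow> j \<le> 0"
    by (rule nth_in_drop[OF NL_facts(2)[OF assms(1,2)]]) (use NL_len[OF assms(1,2)] in auto)
  then show ?thesis using NL_facts(5)[OF assms(1,2)] assms(3) by simp
qed

lemma top_in_drop:
  assumes "m \<ge> 3" "isD m D" "j < length (NL m D)"
  shows "m - 2 \<in> set (drop j (NL m D))"
proof -
  have "NL m D ! (length (NL m D) - 1) \<in> set (drop j (NL m D)) \<longleftrightarrow> j \<le> length (NL m D) - 1"
    by (rule nth_in_drop[OF NL_facts(2)[OF assms(1,2)]]) (use NL_len[OF assms(1,2)] in auto)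
  then show ?thesis using NL_facts(6)[OF assms(1,2)] assms(3) by simp
qed

lemma top_notin_take:
  assumes "m \<ge> 3" "isD m D" "s < length (NL m D)"
  shows "m - 2 \<notin> set (take s (NL m D))"
proof -
  have "NL m D ! (length (NL m D) - 1) \<in> set (take s (NL m D)) \<longleftrightarrow> length (NL m D) - 1 < s"
    by (rule nth_in_take[OF NL_facts(2)[OF assms(1,2)]]) (use NL_len[OF assms(1,2)] in auto)
  then show ?thesis using NL_facts(6)[OF assms(1,2)] assms(3) by simp
qed

lemma D_split:
  assumes "isD m D"
  shows "D = lowD m D \<union> (\<lambda>u. (u, m - 1)) ` nbr m D" "lowD m D \<inter> (\<lambda>u. (u, m - 1)) ` nbr m D = {}"
  unfolding lowD_def nbr_def by auto

lemma card_D: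
  assumes "isD m D"
  shows "card D = card (lowD m D) + card (nbr m D)"
proof -
  have f: "finite D" using isD_finite[OF assms] .
  have "card D = card (lowD m D \<union> (\<lambda>u. (u, m - 1)) ` nbr m D)"
    using arg_cong[OF D_split(1)[OF assms], of card] .
  also have "\<dots> = card (lowD m D) + card ((\<lambda>u. (u, m - 1)) ` nbr m D)"
  proof (rule card_Un_disjoint)
    show "finite (lowD m D)" unfolding lowD_def using f by simp
    have "(\<lambda>u. (u, m - 1)) ` nbr m D \<subseteq> D" unfolding nbr_def by auto
    then show "finite ((\<lambda>u. (u, m - 1)) ` nbr m D)" using f finite_subset by blast
  qed (use D_split[OF assms] in simp)
  finally have "card D = card (lowD m D) + card ((\<lambda>u. (u, m - 1)) ` nbr m D)" .
  moreover have "card ((\<lambda>u. (u, m - 1)) ` nbr m D) = card (nbr m D)"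
    by (rule card_image) (auto simp: inj_on_def)
  ultimately show ?thesis by simp
qed

lemma lowD_snd: "isD m D \<Longrightarrow> d \<in> lowD m D \<Longrightarrow> snd d < m - 1"
proof -
  assume a: "isD m D" "d \<in> lowD m D"
  obtain x y where d: "d = (x, y)" by (cases d)
  then have "(x, y) \<in> diagonals m" "y \<noteq> m - 1" using a unfolding lowD_def isD_def by auto
  then have "y < m" "y \<noteq> m - 1" unfolding diag_iff by auto
  then show ?thesis using d by simp
qed


lemma cross_sym: "crossing d e \<longleftrightarrow> crossing e d"
  by (cases d, cases e) (auto simp: cross_iff)

lemma low_V:
  assumes m: "m \<ge> 3" and D: "isD m D" and d: "(a, b) \<in> lowD m D" and u: "u \<in> Vs m D"
  shows "\<not> (a < u \<and> u < b)"
proof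
  assume au: "a < u \<and> u < b"
  have b: "b < m - 1" using lowD_snd[OF D d] by simp
  have dD: "(a, b) \<in> D" using d unfolding lowD_def by simp
  have "u \<in> nbr m D \<or> u = 0 \<or> u = m - 2" using u unfolding Vs_def by auto
  then show False
  proof (elim disjE)
    assume "u \<in> nbr m D"
    then have "(u, m - 1) \<in> D" unfolding nbr_def by simp
    then have "\<not> crossing (a, b) (u, m - 1)" using D dD unfolding isD_def by blast
    then show False using au b by (simp add: cross_iff)
  qed (use au b in auto)
qed

definition tri :: "nat \<Rightarrow> (nat \<times> nat) set \<Rightarrow> bool" where
  "tri m D' \<longleftrightarrow> (insert 0 {u. (u, m) \<in> D'}) \<inter> (insert (m - 2) {u. (u, m - 1) \<in> D'}) \<noteq> {}"

lemma ch_props: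
  assumes m: "m \<ge> 3" and D: "isD m D" and s1: "1 \<le> s" and js: "j \<le> s" and sj: "s \<le> j + 1"
    and jl: "j < length (NL m D)" and sl: "s \<le> length (NL m D)"
  shows "isD (Suc m) (ch m s j D)"
    "card (ch m s j D) + j = card D + s"
    "{u. (u, m) \<in> ch m s j D} = set (take s (NL m D)) - {0}"
    "{u. (u, m - 1) \<in> ch m s j D} = set (drop j (NL m D)) - {m - 2}"
    "{d \<in> ch m s j D. snd d < m - 1} = lowD m D"
    "tri m (ch m s j D) \<longleftrightarrow> j < s"
proof -
  define N where "N = NL m D"
  define L where "L = lowD m D"
  define X where "X = set (take s N) - {0}"
  define Y where "Y = set (drop j N) - {m - 2}"
  note NF = NL_facts[OF m D, folded N_def]
  have chd: "ch m s j D = L \<union> (\<lambda>u. (u, m)) ` X \<union> (\<lambda>u. (u, m - 1)) ` Y"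
    unfolding ch_def L_def X_def Y_def N_def ..
  have Lsnd: "\<And>d. d \<in> L \<Longrightarrow> snd d < m - 1" unfolding L_def using lowD_snd[OF D] by blast
  have XV: "X \<subseteq> Vs m D" unfolding X_def using NF(3) set_take_subset by fastforce
  have YV: "Y \<subseteq> Vs m D" unfolding Y_def using NF(3) set_drop_subset by fastforce
  have Vle: "\<And>u. u \<in> Vs m D \<Longrightarrow> u \<le> m - 2" using Vs_facts(2)[OF m D] by auto
  have XY: "\<And>u v. u \<in> X \<Longrightarrow> v \<in> Y \<Longrightarrow> u \<le> v"
    unfolding X_def Y_def using take_drop_le[OF NF(1) _ _ sj] by blast
  have z: "0 \<in> set (take s N)" unfolding N_def by (rule zero_in_take[OF m D s1])
  have t: "m - 2 \<in> set (drop j N)" unfolding N_def by (rule top_in_drop[OF m D jl])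
  have m0: "m - 2 \<noteq> 0" using m by simp
  have memm: "\<And>u. (u, m) \<in> ch m s j D \<longleftrightarrow> u \<in> X"
  proof -
    fix u
    have "(u, m) \<notin> L" using Lsnd by fastforce
    then show "(u, m) \<in> ch m s j D \<longleftrightarrow> u \<in> X" unfolding chd using m by auto
  qed
  have memm1: "\<And>u. (u, m - 1) \<in> ch m s j D \<longleftrightarrow> u \<in> Y"
  proof -
    fix u
    have "(u, m - 1) \<notin> L" using Lsnd by fastforce
    then show "(u, m - 1) \<in> ch m s j D \<longleftrightarrow> u \<in> Y" unfolding chd using m by auto
  qed
  show c3: "{u. (u, m) \<in> ch m s j D} = set (take s (NL m D)) - {0}"
    using memm unfolding X_def N_def by auto
  show c4: "{u. (u, m - 1) \<in> ch m s j D} = set (drop j (NL m D)) - {m - 2}"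
    using memm1 unfolding Y_def N_def by auto
  show "{d \<in> ch m s j D. snd d < m - 1} = lowD m D"
    unfolding chd using Lsnd m unfolding L_def[symmetric] by auto
  have A0: "insert 0 {u. (u, m) \<in> ch m s j D} = set (take s N)"
    using c3 z unfolding N_def by auto
  have B0: "insert (m - 2) {u. (u, m - 1) \<in> ch m s j D} = set (drop j N)"
    using c4 t unfolding N_def by auto
  show "tri m (ch m s j D) \<longleftrightarrow> j < s"
  proof
    assume "tri m (ch m s j D)"
    then have "set (take s N) \<inter> set (drop j N) \<noteq> {}" unfolding tri_def A0 B0 .
    then show "j < s" using set_take_disj_set_drop_if_distinct[OF NF(2), of s j] by force
  next
    assume "j < s"
    then have "N ! j \<in> set (take s N)" "N ! j \<in> set (drop j N)"
      using nth_in_take[OF NF(2), of j s] nth_in_drop[OF NF(2), of j j] jl unfolding N_def by auto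
    then show "tri m (ch m s j D)" unfolding tri_def A0 B0 by blast
  qed
  have finL: "finite L" unfolding L_def lowD_def using isD_finite[OF D] by simp
  have cX: "card X = s - 1"
  proof -
    have "card (set (take s N)) = s" using card_take[OF NF(2)] sl unfolding N_def by simp
    then show ?thesis unfolding X_def using z by simp
  qed
  have cY: "card Y = length N - j - 1"
  proof -
    have "card (set (drop j N)) = length N - j" using card_drop[OF NF(2)] by simp
    then show ?thesis unfolding Y_def using t by simp
  qed
  have "card (ch m s j D) = card L + card ((\<lambda>u. (u, m)) ` X) + card ((\<lambda>u. (u, m - 1)) ` Y)"
    unfolding chd
  proof (subst card_Un_disjoint)
    show "finite (L \<union> (\<lambda>u. (u, m)) ` X)" using finL unfolding X_def by simp
    show "finite ((\<lambda>u. (u, m - 1)) ` Y)" unfolding Y_def by simp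
    show "(L \<union> (\<lambda>u. (u, m)) ` X) \<inter> (\<lambda>u. (u, m - 1)) ` Y = {}" using Lsnd m by force
    show "card (L \<union> (\<lambda>u. (u, m)) ` X) + card ((\<lambda>u. (u, m - 1)) ` Y) =
        card L + card ((\<lambda>u. (u, m)) ` X) + card ((\<lambda>u. (u, m - 1)) ` Y)"
    proof (subst card_Un_disjoint)
      show "finite L" by (rule finL)
      show "finite ((\<lambda>u. (u, m)) ` X)" unfolding X_def by simp
      show "L \<inter> (\<lambda>u. (u, m)) ` X = {}" using Lsnd m by force
    qed simp
  qed
  also have "\<dots> = card L + card X + card Y"
    by (subst card_image, simp add: inj_on_def)+ simp
  finally have cc: "card (ch m s j D) = card L + (s - 1) + (length N - j - 1)" using cX cY by simp
  have cD: "card D = card L + card (nbr m D)" unfolding L_def by (rule card_D[OF D])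
  show "card (ch m s j D) + j = card D + s"
    using cc cD NF(4) s1 jl unfolding N_def by simp
  show "isD (Suc m) (ch m s j D)"
    unfolding isD_def
  proof (intro conjI ballI subsetI)
    fix d assume "d \<in> ch m s j D"
    then have "d \<in> L \<or> (\<exists>u\<in>X. d = (u, m)) \<or> (\<exists>u\<in>Y. d = (u, m - 1))" unfolding chd by auto
    then show "d \<in> diagonals (Suc m)"
    proof (elim disjE bexE)
      assume dL: "d \<in> L"
      obtain a b where d: "d = (a, b)" by (cases d)
      have "(a, b) \<in> diagonals m" "b < m - 1" using dL D Lsnd[OF dL] d unfolding L_def lowD_def isD_def by auto
      then show ?thesis unfolding d diag_iff by auto
    next
      fix u assume "u \<in> X" "d = (u, m)"
      moreover have "u \<le> m - 2" "u \<noteq> 0" using \<open>u \<in> X\<close> XV Vle unfolding X_def by auto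
      ultimately show ?thesis using m by (auto simp: diag_iff)
    next
      fix u assume "u \<in> Y" "d = (u, m - 1)"
      moreover have "u \<le> m - 2" "u \<noteq> m - 2" using \<open>u \<in> Y\<close> YV Vle unfolding Y_def by auto
      ultimately show ?thesis using m by (auto simp: diag_iff)
    qed
  next
    fix d e assume de: "d \<in> ch m s j D" "e \<in> ch m s j D"
    have cases: "\<And>d. d \<in> ch m s j D \<Longrightarrow> d \<in> L \<or> (\<exists>u\<in>X. d = (u, m)) \<or> (\<exists>u\<in>Y. d = (u, m - 1))"
      unfolding chd by auto
    have LL: "\<And>d e. d \<in> L \<Longrightarrow> e \<in> L \<Longrightarrow> \<not> crossing d e"
      using D unfolding isD_def L_def lowD_def by auto
    have LX: "\<And>d u. d \<in> L \<Longrightarrow> u \<in> Vs m D \<Longrightarrow> \<not> crossing d (u, m) \<and> \<not> crossing d (u, m - 1)"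
    proof -
      fix d u assume dL: "d \<in> L" and u: "u \<in> Vs m D"
      obtain a b where d: "d = (a, b)" by (cases d)
      have "\<not> (a < u \<and> u < b)" using low_V[OF m D _ u] dL d unfolding L_def by simp
      moreover have "b < m - 1" using Lsnd[OF dL] d by simp
      ultimately show "\<not> crossing d (u, m) \<and> \<not> crossing d (u, m - 1)" unfolding d cross_iff by auto
    qed
    have XX: "\<And>u v. \<not> crossing (u, m) (v, m)" by (simp add: cross_iff)
    have YY: "\<And>u v. \<not> crossing (u, m - 1) (v, m - 1)" by (simp add: cross_iff)
    have XY': "\<And>u v. u \<in> X \<Longrightarrow> v \<in> Y \<Longrightarrow> \<not> crossing (u, m) (v, m - 1)"
    proof -
      fix u v assume "u \<in> X" "v \<in> Y"
      then have "u \<le> v" by (rule XY)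
      then show "\<not> crossing (u, m) (v, m - 1)" by (auto simp: cross_iff)
    qed
    show "\<not> crossing d e"
      using cases[OF de(1)] cases[OF de(2)]
    proof (elim disjE bexE)
    qed (use LL LX XX YY XY' XV YV cross_sym in \<open>blast+\<close>)
  qed
qed


definition par :: "nat \<Rightarrow> (nat \<times> nat) set \<Rightarrow> (nat \<times> nat) set" where
  "par m D' = {d \<in> D'. snd d < m - 1} \<union>
     (\<lambda>u. (u, m - 1)) ` (({u. (u, m) \<in> D'} \<union> {u. (u, m - 1) \<in> D'}) - {0, m - 2})"

lemma par_ch:
  assumes m: "m \<ge> 3" and D: "isD m D" and s1: "1 \<le> s" and js: "j \<le> s" and sj: "s \<le> j + 1"
    and jl: "j < length (NL m D)" and sl: "s \<le> length (NL m D)"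
  shows "par m (ch m s j D) = D"
proof -
  note cp = ch_props[OF assms]
  have "(set (take s (NL m D)) - {0} \<union> (set (drop j (NL m D)) - {m - 2})) - {0, m - 2}
      = (set (take s (NL m D)) \<union> set (drop j (NL m D))) - {0, m - 2}" by auto
  also have "\<dots> = Vs m D - {0, m - 2}" using take_drop_union[OF js, of "NL m D"] NL_facts(3)[OF m D] by simp
  also have "\<dots> = nbr m D"
  proof -
    have "0 \<notin> {1..m-3}" "m - 2 \<notin> {1..m-3}" using m by auto
    then have "0 \<notin> nbr m D" "m - 2 \<notin> nbr m D" using nbr_range[OF m D] by blast+
    then show ?thesis unfolding Vs_def by auto
  qed
  finally have e: "(set (take s (NL m D)) - {0} \<union> (set (drop j (NL m D)) - {m - 2})) - {0, m - 2} = nbr m D" .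
  show ?thesis unfolding par_def cp(3) cp(4) cp(5) e using D_split(1)[OF D] by simp
qed

lemma D_surj:
  assumes m: "m \<ge> 3" and D': "isD (Suc m) D'"
  defines "s \<equiv> dstat (Suc m) D'" and "P \<equiv> par m D'"
  shows "isD m P"
    "\<not> tri m D' \<Longrightarrow> card P = card D' \<and> s \<le> dstat m P \<and> s < length (NL m P) \<and> ch m s s P = D'"
    "tri m D' \<Longrightarrow> card P + 1 = card D' \<and> s - 1 \<le> dstat m P \<and> s \<le> length (NL m P) \<and> ch m s (s - 1) P = D'"
proof -
  define A where "A = {u. (u, m) \<in> D'}"
  define B where "B = {u. (u, m - 1) \<in> D'}"
  define L where "L = {d \<in> D'. snd d < m - 1}"
  have fD': "finite D'" using isD_finite[OF D'] .
  have Dsub: "D' \<subseteq> diagonals (Suc m)" and Dnc: "\<And>d e. d \<in> D' \<Longrightarrow> e \<in> D' \<Longrightarrow> \<not> crossing d e"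
    using D' unfolding isD_def by auto
  have Arange: "\<And>u. u \<in> A \<Longrightarrow> 1 \<le> u \<and> u \<le> m - 2"
  proof -
    fix u assume "u \<in> A"
    then have "(u, m) \<in> diagonals (Suc m)" using Dsub unfolding A_def by auto
    then show "1 \<le> u \<and> u \<le> m - 2" unfolding diag_iff by auto
  qed
  have Brange: "\<And>u. u \<in> B \<Longrightarrow> u + 3 \<le> m"
  proof -
    fix u assume "u \<in> B"
    then have "(u, m - 1) \<in> diagonals (Suc m)" using Dsub unfolding B_def by auto
    then show "u + 3 \<le> m" unfolding diag_iff using m by auto
  qed
  have AB: "\<And>a b. a \<in> A \<Longrightarrow> b \<in> B \<Longrightarrow> a \<le> b"
  proof (rule ccontr)
    fix a b assume a: "a \<in> A" and b: "b \<in> B" and "\<not> a \<le> b"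
    then have "b < a" by simp
    moreover have "a < m - 1" using Arange[OF a] m by auto
    ultimately have "crossing (a, m) (b, m - 1)" unfolding cross_iff using m by auto
    then show False using Dnc a b unfolding A_def B_def by auto
  qed
  have Lsnd: "\<And>d. d \<in> L \<Longrightarrow> snd d < m - 1" unfolding L_def by simp
  have Dsplit: "D' = L \<union> (\<lambda>u. (u, m)) ` A \<union> (\<lambda>u. (u, m - 1)) ` B"
  proof (intro equalityI subsetI)
    fix d assume dD: "d \<in> D'"
    obtain a b where d: "d = (a, b)" by (cases d)
    have "(a, b) \<in> diagonals (Suc m)" using Dsub dD d by auto
    then have "b < Suc m" unfolding diag_iff by simp
    then have "b < m - 1 \<or> b = m - 1 \<or> b = m" by auto
    then show "d \<in> L \<union> (\<lambda>u. (u, m)) ` A \<union> (\<lambda>u. (u, m - 1)) ` B"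
      using dD d unfolding L_def A_def B_def by auto
  qed (auto simp: L_def A_def B_def)
  have PP: "P = L \<union> (\<lambda>u. (u, m - 1)) ` ((A \<union> B) - {0, m - 2})"
    unfolding P_def par_def L_def A_def B_def ..
  have LV: "\<And>a b u. (a, b) \<in> L \<Longrightarrow> u \<in> A \<union> B \<Longrightarrow> \<not> (a < u \<and> u < b)"
  proof -
    fix a b u assume ab: "(a, b) \<in> L" and u: "u \<in> A \<union> B"
    have b: "b < m - 1" using Lsnd[OF ab] by simp
    have abD: "(a, b) \<in> D'" using ab unfolding L_def by simp
    show "\<not> (a < u \<and> u < b)"
    proof
      assume au: "a < u \<and> u < b"
      show False
      proof (cases "u \<in> A")
        case True
        then have "\<not> crossing (a, b) (u, m)" using Dnc abD unfolding A_def by auto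
        then show False using au b by (auto simp: cross_iff)
      next
        case False
        then have "u \<in> B" using u by simp
        then have "\<not> crossing (a, b) (u, m - 1)" using Dnc abD unfolding B_def by auto
        then show False using au b by (auto simp: cross_iff)
      qed
    qed
  qed
  show isP: "isD m P"
    unfolding isD_def
  proof (intro conjI ballI subsetI)
    fix d assume "d \<in> P"
    then have "d \<in> L \<or> (\<exists>u\<in>(A \<union> B) - {0, m - 2}. d = (u, m - 1))" unfolding PP by auto
    then show "d \<in> diagonals m"
    proof (elim disjE bexE)
      assume dL: "d \<in> L"
      obtain a b where d: "d = (a, b)" by (cases d)
      have "(a, b) \<in> diagonals (Suc m)" "b < m - 1" using dL Dsub d unfolding L_def by auto
      then show ?thesis unfolding d diag_iff by auto
    next
      fix u assume u: "u \<in> (A \<union> B) - {0, m - 2}" "d = (u, m - 1)"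
      then have "u \<noteq> 0" "u \<noteq> m - 2" "u \<le> m - 2" using Arange Brange by force+
      then show ?thesis using u m by (auto simp: diag_iff)
    qed
  next
    fix d e assume de: "d \<in> P" "e \<in> P"
    have cases: "\<And>d. d \<in> P \<Longrightarrow> d \<in> L \<or> (\<exists>u\<in>A \<union> B. d = (u, m - 1))" unfolding PP by auto
    have LL: "\<And>d e. d \<in> L \<Longrightarrow> e \<in> L \<Longrightarrow> \<not> crossing d e" using Dnc unfolding L_def by auto
    have LU: "\<And>d u. d \<in> L \<Longrightarrow> u \<in> A \<union> B \<Longrightarrow> \<not> crossing d (u, m - 1)"
    proof -
      fix d u assume dL: "d \<in> L" and u: "u \<in> A \<union> B"
      obtain a b where d: "d = (a, b)" by (cases d)
      have "\<not> (a < u \<and> u < b)" using LV dL u d by blast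
      moreover have "b < m - 1" using Lsnd[OF dL] d by simp
      ultimately show "\<not> crossing d (u, m - 1)" unfolding d cross_iff by auto
    qed
    have UU: "\<And>u v. \<not> crossing (u, m - 1) (v, m - 1)" by (simp add: cross_iff)
    show "\<not> crossing d e"
      using cases[OF de(1)] cases[OF de(2)]
    proof (elim disjE bexE)
    qed (use LL LU UU cross_sym in \<open>blast+\<close>)
  qed
  have nbrP: "nbr m P = (A \<union> B) - {0, m - 2}"
  proof -
    have "(u, m - 1) \<notin> L" for u using Lsnd by fastforce
    then show ?thesis unfolding nbr_def PP by auto
  qed
  define A0 where "A0 = insert 0 A"
  define B0 where "B0 = insert (m - 2) B"
  have VP: "Vs m P = A0 \<union> B0" unfolding Vs_def nbrP A0_def B0_def by auto
  have "A \<subseteq> {..m}"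
  proof
    fix x assume "x \<in> A" then have "x \<le> m - 2" using Arange by blast
    then show "x \<in> {..m}" by simp
  qed
  then have finA: "finite A" using finite_subset by blast
  have "B \<subseteq> {..m}"
  proof
    fix x assume "x \<in> B" then have "x + 3 \<le> m" using Brange by blast
    then show "x \<in> {..m}" by simp
  qed
  then have finB: "finite B" using finite_subset by blast
  have A0n: "0 \<notin> A" using Arange by force
  have B0n: "m - 2 \<notin> B" using Brange by force
  have cA0: "card A0 = card A + 1" unfolding A0_def using finA A0n by simp
  have cB0: "card B0 = card B + 1" unfolding B0_def using finB B0n by simp
  have "nbr (Suc m) D' = A" unfolding nbr_def A_def by simp
  then have sA: "s = card A0" unfolding s_def dstat_def using cA0 by simp
  have A0B0: "\<And>a b. a \<in> A0 \<Longrightarrow> b \<in> B0 \<Longrightarrow> a \<le> b"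
    using AB Arange unfolding A0_def B0_def by auto
  have triD: "tri m D' \<longleftrightarrow> A0 \<inter> B0 \<noteq> {}" unfolding tri_def A0_def B0_def A_def B_def ..
  note NF = NL_facts[OF m isP]
  have finV: "finite (Vs m P)" using Vs_facts(1)[OF m isP] .
  have cV: "card (Vs m P) = card (nbr m P) + 2" using Vs_facts(5)[OF m isP] .
  have lenN: "length (NL m P) = card (Vs m P)" using NF(4) cV by simp
  have cardP: "card P = card L + card (nbr m P)"
  proof -
    have "card P = card (lowD m P) + card (nbr m P)" by (rule card_D[OF isP])
    moreover have "lowD m P = L" unfolding lowD_def PP using Lsnd by fastforce
    ultimately show ?thesis by simp
  qed
  have cardD': "card D' = card L + card A + card B"
  proof -
    have "card D' = card (L \<union> (\<lambda>u. (u, m)) ` A \<union> (\<lambda>u. (u, m - 1)) ` B)"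
      using arg_cong[OF Dsplit, of card] .
    also have "\<dots> = card L + card ((\<lambda>u. (u, m)) ` A) + card ((\<lambda>u. (u, m - 1)) ` B)"
    proof (subst card_Un_disjoint)
      show "finite (L \<union> (\<lambda>u. (u, m)) ` A)" using fD' finA unfolding L_def by simp
      show "finite ((\<lambda>u. (u, m - 1)) ` B)" using finB by simp
      show "(L \<union> (\<lambda>u. (u, m)) ` A) \<inter> (\<lambda>u. (u, m - 1)) ` B = {}" using Lsnd m by force
      show "card (L \<union> (\<lambda>u. (u, m)) ` A) + card ((\<lambda>u. (u, m - 1)) ` B) =
          card L + card ((\<lambda>u. (u, m)) ` A) + card ((\<lambda>u. (u, m - 1)) ` B)"
      proof (subst card_Un_disjoint)
        show "finite L" using fD' unfolding L_def by simp
        show "finite ((\<lambda>u. (u, m)) ` A)" using finA by simp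
        show "L \<inter> (\<lambda>u. (u, m)) ` A = {}" using Lsnd m by force
      qed simp
    qed
    also have "\<dots> = card L + card A + card B"
      by (subst card_image, simp add: inj_on_def)+ simp
    finally show ?thesis .
  qed
  have cVn: "card (Vs m P) = card A0 + card B0 - card (A0 \<inter> B0)"
  proof -
    have "card (A0 \<union> B0) + card (A0 \<inter> B0) = card A0 + card B0"
      using card_Un_Int[of A0 B0] finA finB unfolding A0_def B0_def by simp
    then show ?thesis unfolding VP by simp
  qed
  have dstP: "dstat m P = card (Vs m P) - 1" unfolding dstat_def using cV by simp
  have take_s: "set (take s (NL m P)) = A0"
  proof -
    have "set (take (card A0) (NL m P)) = A0"
    proof (rule take_char[OF NF(1) NF(2)])
      show "A0 \<subseteq> set (NL m P)" unfolding NF(3) VP by simp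
      show "\<forall>a\<in>A0. \<forall>x\<in>set (NL m P) - A0. a < x"
      proof (intro ballI)
        fix a x assume a: "a \<in> A0" and x: "x \<in> set (NL m P) - A0"
        then have "x \<in> B0" "x \<noteq> a" unfolding NF(3) VP by auto
        then show "a < x" using A0B0[OF a] by force
      qed
    qed
    then show ?thesis unfolding sA .
  qed
  have chP: "\<And>j. ch m s j P = L \<union> (\<lambda>u. (u, m)) ` A \<union> (\<lambda>u. (u, m - 1)) ` (set (drop j (NL m P)) - {m - 2})"
  proof -
    fix j
    have "lowD m P = L" unfolding lowD_def PP using Lsnd by fastforce
    moreover have "set (take s (NL m P)) - {0} = A" unfolding take_s A0_def using A0n by auto
    ultimately show "ch m s j P = L \<union> (\<lambda>u. (u, m)) ` A \<union> (\<lambda>u. (u, m - 1)) ` (set (drop j (NL m P)) - {m - 2})"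
      unfolding ch_def by simp
  qed
  show "\<not> tri m D' \<Longrightarrow> card P = card D' \<and> s \<le> dstat m P \<and> s < length (NL m P) \<and> ch m s s P = D'"
  proof -
    assume nt: "\<not> tri m D'"
    then have dis: "A0 \<inter> B0 = {}" using triD by simp
    have drop_s: "set (drop s (NL m P)) = B0"
      unfolding drop_compl[OF NF(2)] take_s NF(3) VP using dis by auto
    have cVV: "card (Vs m P) = card A0 + card B0" using cVn dis by simp
    have "card P = card D'" using cardP cardD' cV cVV cA0 cB0 by simp
    moreover have "s \<le> dstat m P" using dstP cVV cB0 sA by simp
    moreover have "s < length (NL m P)" using lenN cVV cB0 sA by simp
    moreover have "ch m s s P = D'"
      unfolding chP drop_s B0_def using B0n Dsplit by simp
    ultimately show ?thesis by blast
  qed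
  show "tri m D' \<Longrightarrow> card P + 1 = card D' \<and> s - 1 \<le> dstat m P \<and> s \<le> length (NL m P) \<and> ch m s (s - 1) P = D'"
  proof -
    assume tr: "tri m D'"
    then obtain c where c: "c \<in> A0" "c \<in> B0" using triD by blast
    have one: "A0 \<inter> B0 = {c}"
    proof (intro equalityI subsetI)
      fix x assume x: "x \<in> A0 \<inter> B0"
      then have "x \<le> c" "c \<le> x" using A0B0 c by auto
      then show "x \<in> {c}" by simp
    qed (use c in auto)
    have finA0: "finite A0" unfolding A0_def using finA by simp
    have cS: "card (A0 - {c}) = s - 1" using c(1) finA0 sA by simp
    have take_s1: "set (take (s - 1) (NL m P)) = A0 - {c}"
    proof -
      have "set (take (card (A0 - {c})) (NL m P)) = A0 - {c}"
      proof (rule take_char[OF NF(1) NF(2)])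
        show "A0 - {c} \<subseteq> set (NL m P)" unfolding NF(3) VP by auto
        show "\<forall>a\<in>A0 - {c}. \<forall>x\<in>set (NL m P) - (A0 - {c}). a < x"
        proof (intro ballI)
          fix a x assume a: "a \<in> A0 - {c}" and x: "x \<in> set (NL m P) - (A0 - {c})"
          then have "x \<in> B0" "x \<noteq> a" unfolding NF(3) VP using c by auto
          then show "a < x" using A0B0[of a x] a by force
        qed
      qed
      then show ?thesis unfolding cS .
    qed
    have drop_s1: "set (drop (s - 1) (NL m P)) = B0"
      unfolding drop_compl[OF NF(2)] take_s1 NF(3) VP using one c by auto
    have cVV: "card (Vs m P) + 1 = card A0 + card B0"
      using cVn one card_mono[of A0 "A0 \<inter> B0"] finA0 c by (auto simp: A0_def)
    have "card P + 1 = card D'" using cardP cardD' cV cVV cA0 cB0 by simp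
    moreover have "s - 1 \<le> dstat m P" using dstP cVV cB0 sA by simp
    moreover have "s \<le> length (NL m P)" using lenN cVV cB0 sA by simp
    moreover have "ch m s (s - 1) P = D'"
      unfolding chP drop_s1 B0_def using B0n Dsplit by simp
    ultimately show ?thesis by blast
  qed
qed


lemma dstat_ch:
  assumes m: "m \<ge> 3" and D: "isD m D" and s1: "1 \<le> s" and js: "j \<le> s" and sj: "s \<le> j + 1"
    and jl: "j < length (NL m D)" and sl: "s \<le> length (NL m D)"
  shows "dstat (Suc m) (ch m s j D) = s"
proof -
  have "nbr (Suc m) (ch m s j D) = set (take s (NL m D)) - {0}"
    unfolding nbr_def using ch_props(3)[OF assms] by simp
  moreover have "card (set (take s (NL m D))) = s" using card_take[OF NL_facts(2)[OF m D]] sl by simp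
  moreover have "0 \<in> set (take s (NL m D))" by (rule zero_in_take[OF m D s1])
  ultimately show ?thesis unfolding dstat_def using s1 by simp
qed

lemma dstat_le: "isD m D \<Longrightarrow> dstat m D \<le> card D + 1"
  unfolding dstat_def using card_D[of m D] by simp

lemma finite_dissections: "finite (dissections m k)"
proof -
  have "dissections m k \<subseteq> Pow (diagonals m)" unfolding dissections_def by auto
  then show ?thesis using finite_diagonals finite_subset by (metis finite_Pow_iff)
qed

lemma len_NL: "m \<ge> 3 \<Longrightarrow> isD m D \<Longrightarrow> length (NL m D) = dstat m D + 1"
  using NL_facts(4)[of m D] unfolding dstat_def by simp

lemma D_rec:
  assumes m: "m \<ge> 3" and s1: "1 \<le> s" and sk: "s \<le> k"
  shows "Dset (Suc m) k s = ch m s s ` {D \<in> dissections m k. s \<le> dstat m D}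
     \<union> ch m s (s - 1) ` {D \<in> dissections m (k - 1). s - 1 \<le> dstat m D}"
  (is "?L = ?I1 \<union> ?I2")
proof (intro equalityI subsetI)
  fix D' assume "D' \<in> ?L"
  then have D': "isD (Suc m) D'" "card D' + 1 = k" "dstat (Suc m) D' = s"
    unfolding Dset_def dissections_iff by auto
  define P where "P = par m D'"
  note sur = D_surj[OF m D'(1), unfolded D'(3), folded P_def]
  show "D' \<in> ?I1 \<union> ?I2"
  proof (cases "tri m D'")
    case False
    then have "card P = card D'" "s \<le> dstat m P" "ch m s s P = D'" using sur(2) by auto
    then have "P \<in> {D \<in> dissections m k. s \<le> dstat m D}" using sur(1) D'(2) unfolding dissections_iff by simp
    then show ?thesis using \<open>ch m s s P = D'\<close> by blast
  next
    case True
    then have "card P + 1 = card D'" "s - 1 \<le> dstat m P" "ch m s (s - 1) P = D'" using sur(3) by auto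
    then have "P \<in> {D \<in> dissections m (k - 1). s - 1 \<le> dstat m D}" using sur(1) D'(2) unfolding dissections_iff by simp
    then show ?thesis using \<open>ch m s (s - 1) P = D'\<close> by blast
  qed
next
  fix D' assume "D' \<in> ?I1 \<union> ?I2"
  then show "D' \<in> ?L"
  proof
    assume "D' \<in> ?I1"
    then obtain D where D: "isD m D" "card D + 1 = k" "s \<le> dstat m D" and D'd: "D' = ch m s s D"
      unfolding dissections_iff by auto
    have l: "s < length (NL m D)" "s \<le> length (NL m D)" using len_NL[OF m D(1)] D(3) by auto
    have a: "1 \<le> s" "s \<le> s" "s \<le> s + 1" using s1 by auto
    note cp = ch_props[OF m D(1) a l]
    have "dstat (Suc m) D' = s" unfolding D'd by (rule dstat_ch[OF m D(1) a l])
    moreover have "card D' + 1 = k" using cp(2) D(2) unfolding D'd by simp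
    ultimately show ?thesis unfolding Dset_def dissections_iff D'd using cp(1) by simp
  next
    assume "D' \<in> ?I2"
    then obtain D where D: "isD m D" "card D + 1 = k - 1" "s - 1 \<le> dstat m D" and D'd: "D' = ch m s (s - 1) D"
      unfolding dissections_iff by auto
    have l: "s - 1 < length (NL m D)" "s \<le> length (NL m D)" using len_NL[OF m D(1)] D(3) s1 by auto
    have a: "1 \<le> s" "s - 1 \<le> s" "s \<le> s - 1 + 1" using s1 by auto
    note cp = ch_props[OF m D(1) a l]
    have "dstat (Suc m) D' = s" unfolding D'd by (rule dstat_ch[OF m D(1) a l])
    moreover have "card D' + 1 = k" using cp(2) D(2) s1 unfolding D'd by simp
    ultimately show ?thesis unfolding Dset_def dissections_iff D'd using cp(1) by simp
  qed
qed

lemma diagonals_3: "diagonals 3 = {}"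
  unfolding diagonals_def by auto

lemma dissections_3: "dissections 3 k = (if k = 1 then {{}} else {})"
  unfolding dissections_def diagonals_3 by auto

lemma card_Dset: "card (Dset (Suc (Suc (Suc n))) k s) = ac n k s"
proof (induction n arbitrary: k s)
  case 0
  have e: "Dset 3 k s = (if k = 1 \<and> s = 1 then {{}} else {})"
    unfolding Dset_def dissections_3 dstat_def nbr_def by auto
  show ?case using e by (simp add: numeral_3_eq_3)
next
  case (Suc n)
  define m where "m = Suc (Suc (Suc n))"
  have m3: "m \<ge> 3" unfolding m_def by simp
  show ?case
  proof (cases "1 \<le> s \<and> s \<le> k")
    case False
    have "Dset (Suc m) k s = {}"
    proof (rule ccontr)
      assume "Dset (Suc m) k s \<noteq> {}"
      then obtain D where D: "isD (Suc m) D" "card D + 1 = k" "dstat (Suc m) D = s"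
        unfolding Dset_def dissections_iff by auto
      have "dstat (Suc m) D \<ge> 1" unfolding dstat_def by simp
      moreover have "dstat (Suc m) D \<le> k" using dstat_le[OF D(1)] D(2) by simp
      ultimately show False using False D(3) by simp
    qed
    moreover have "ac (Suc n) k s = 0"
    proof (cases "s = 0")
      case True then show ?thesis by (simp add: A_s0)
    next
      case s0: False
      then have "k < s" using False by simp
      then show ?thesis by (rule A_big)
    qed
    ultimately show ?thesis unfolding m_def by simp
  next
    case True
    then have s1: "1 \<le> s" and sk: "s \<le> k" by auto
    define X1 where "X1 = {D \<in> dissections m k. s \<le> dstat m D}"
    define X2 where "X2 = {D \<in> dissections m (k - 1). s - 1 \<le> dstat m D}"
    have rec: "Dset (Suc m) k s = ch m s s ` X1 \<union> ch m s (s - 1) ` X2"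
      unfolding X1_def X2_def by (rule D_rec[OF m3 s1 sk])
    have fin1: "finite X1" unfolding X1_def using finite_dissections by simp
    have fin2: "finite X2" unfolding X2_def using finite_dissections by simp
    have inj1: "inj_on (ch m s s) X1"
    proof (rule inj_on_inverseI)
      fix D assume "D \<in> X1"
      then have D: "isD m D" "s \<le> dstat m D" unfolding X1_def dissections_iff by auto
      have l: "s < length (NL m D)" "s \<le> length (NL m D)" using len_NL[OF m3 D(1)] D(2) by auto
      show "par m (ch m s s D) = D" by (rule par_ch[OF m3 D(1)]) (use s1 l in auto)
    qed
    have inj2: "inj_on (ch m s (s - 1)) X2"
    proof (rule inj_on_inverseI)
      fix D assume "D \<in> X2"
      then have D: "isD m D" "s - 1 \<le> dstat m D" unfolding X2_def dissections_iff by auto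
      have l: "s - 1 < length (NL m D)" "s \<le> length (NL m D)" using len_NL[OF m3 D(1)] D(2) s1 by auto
      show "par m (ch m s (s - 1) D) = D" by (rule par_ch[OF m3 D(1)]) (use s1 l in auto)
    qed
    have disj: "ch m s s ` X1 \<inter> ch m s (s - 1) ` X2 = {}"
    proof -
      have "\<not> tri m (ch m s s D)" if "D \<in> X1" for D
      proof -
        have D: "isD m D" "s \<le> dstat m D" using that unfolding X1_def dissections_iff by auto
        have l: "s < length (NL m D)" "s \<le> length (NL m D)" using len_NL[OF m3 D(1)] D(2) by auto
        show ?thesis using ch_props(6)[OF m3 D(1) _ _ _ l] s1 by simp
      qed
      moreover have "tri m (ch m s (s - 1) D)" if "D \<in> X2" for D
      proof -
        have D: "isD m D" "s - 1 \<le> dstat m D" using that unfolding X2_def dissections_iff by auto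
        have l: "s - 1 < length (NL m D)" "s \<le> length (NL m D)" using len_NL[OF m3 D(1)] D(2) s1 by auto
        show ?thesis using ch_props(6)[OF m3 D(1) _ _ _ l] s1 by simp
      qed
      ultimately show ?thesis
      proof -
        assume a1: "\<And>D. D \<in> X1 \<Longrightarrow> \<not> tri m (ch m s s D)"
          and a2: "\<And>D. D \<in> X2 \<Longrightarrow> tri m (ch m s (s - 1) D)"
        show ?thesis
        proof (rule ccontr)
          assume "ch m s s ` X1 \<inter> ch m s (s - 1) ` X2 \<noteq> {}"
          then obtain D1 D2 where "D1 \<in> X1" "D2 \<in> X2" "ch m s s D1 = ch m s (s - 1) D2" by blast
          then show False using a1 a2 by metis
        qed
      qed
    qed
    have "card (Dset (Suc m) k s) = card X1 + card X2"
      unfolding rec using card_Un_disjoint[of "ch m s s ` X1" "ch m s (s - 1) ` X2"] fin1 fin2 disj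
        card_image[OF inj1] card_image[OF inj2] by simp
    also have "card X1 = (\<Sum>t=s..k. card (Dset m k t))"
      unfolding X1_def Dset_def
      by (rule card_filter_fibers) (auto simp: finite_dissections dissections_iff intro: order.trans[OF dstat_le])
    also have "card X2 = (\<Sum>t=s-1..k-1. card (Dset m (k-1) t))"
      unfolding X2_def Dset_def
      by (rule card_filter_fibers) (auto simp: finite_dissections dissections_iff intro: order.trans[OF dstat_le])
    finally show ?thesis using Suc.IH s1 unfolding m_def by simp
  qed
qed

lemma card_dissections: "card (dissections (Suc (Suc (Suc n))) k) = Ssum n k"
proof -
  have "card (dissections (Suc (Suc (Suc n))) k) = (\<Sum>t\<in>{..k}. card {D \<in> dissections (Suc (Suc (Suc n))) k. dstat (Suc (Suc (Suc n))) D = t})"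
    by (rule card_fibers) (auto simp: finite_dissections dissections_iff intro: order.trans[OF dstat_le])
  also have "\<dots> = Ssum n k" unfolding Ssum_def using card_Dset unfolding Dset_def by simp
  finally show ?thesis .
qed

theorem mainTheorem5:
  fixes n k :: nat
  assumes "n \<ge> 1" and "k \<ge> 1"
  shows "card (f_words n k) = card (dissections (n + 2) k)
    \<and> real (card (f_words n k)) = (1 / real k) * real ((n - 1) choose (k - 1)) * real ((n + k) choose (k - 1))"
proof -
  obtain n0 where n0: "n = Suc n0" using assms(1) by (cases n) auto
  have "n + 2 = Suc (Suc (Suc n0))" using n0 by simp
  then have "card (dissections (n + 2) k) = Ssum n0 k" using card_dissections by simp
  moreover have "card (f_words n k) = Ssum n0 k" using card_f_words n0 by simp
  moreover have "real (Ssum n0 k) = (1 / real k) * real ((n - 1) choose (k - 1)) * real ((n + k) choose (k - 1))"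
    using S_formula[of n0 k] n0 by simp
  ultimately show ?thesis by simp
qed

end
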